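(* Let $B=\{B_t,\ t\ge0\}$ be a centered Gaussian process with stationary increments, $B_0=0$, and let $T>0$. Suppose Assumption 1 holds: the covariance function has a mixed derivative $\frac{\partial^2}{\partial s\,\partial t}\mathbb{E}[B_tB_s]=K(t-s)$, where $K$ is an even function with $K\in L_1[-T,T]$. Then for every $f\in L_2[0,T]$ the integral $\int_0^T f(t)\,dB_t$ exists as the mean-square limit of the corresponding Riemann sums, and for all $f,g\in L_2[0,T]$ $$\mathbb{E}\Big[\int_0^T f(t)\,dB_t\int_0^T g(s)\,dB_s\Big]=\int_0^T f(t)\int_0^T K(t-s)g(s)\,ds\,dt.$$ *)

theory Defs
  imports "HOL-Probability.Probability"
begin

definition centered_gaussian :: "'a measure \<Rightarrow> ('a \<Rightarrow> real) \<Rightarrow> bool" where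
  "centered_gaussian M X \<longleftrightarrow> X \<in> borel_measurable M \<and>
     ((AE \<omega> in M. X \<omega> = 0) \<or> (\<exists>\<sigma>>0. distributed M lborel X (normal_density 0 \<sigma>)))"

definition centered_gaussian_process :: "'a measure \<Rightarrow> (real \<Rightarrow> 'a \<Rightarrow> real) \<Rightarrow> bool" where
  "centered_gaussian_process M B \<longleftrightarrow>
     (\<forall>I c. finite I \<longrightarrow> I \<subseteq> {0..} \<longrightarrow> centered_gaussian M (\<lambda>\<omega>. \<Sum>i\<in>I. c i * B i \<omega>))"

definition stationary_increments :: "'a measure \<Rightarrow> (real \<Rightarrow> 'a \<Rightarrow> real) \<Rightarrow> bool" where
  "stationary_increments M B \<longleftrightarrow>
     (\<forall>h\<ge>0. \<forall>I. finite I \<longrightarrow> I \<subseteq> {0..} \<longrightarrow>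
        distr M (PiM I (\<lambda>_. borel)) (\<lambda>\<omega>. \<lambda>i\<in>I. B (i + h) \<omega> - B h \<omega>)
      = distr M (PiM I (\<lambda>_. borel)) (\<lambda>\<omega>. \<lambda>i\<in>I. B i \<omega>))"

definition L2_on :: "real \<Rightarrow> (real \<Rightarrow> real) \<Rightarrow> bool" where
  "L2_on T f \<longleftrightarrow> set_borel_measurable lborel {0..T} f \<and> set_integrable lborel {0..T} (\<lambda>t. (f t)^2)"

definition partition_of :: "real \<Rightarrow> nat \<Rightarrow> (nat \<Rightarrow> real) \<Rightarrow> bool" where
  "partition_of T n p \<longleftrightarrow> p 0 = 0 \<and> p n = T \<and> (\<forall>k<n. p k < p (Suc k))"

definition step_fun :: "nat \<Rightarrow> (nat \<Rightarrow> real) \<Rightarrow> (nat \<Rightarrow> real) \<Rightarrow> real \<Rightarrow> real" where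
  "step_fun n p a t = (\<Sum>k<n. a k * indicator {p k<..p (Suc k)} t)"

definition riemann_sum :: "(real \<Rightarrow> 'a \<Rightarrow> real) \<Rightarrow> nat \<Rightarrow> (nat \<Rightarrow> real) \<Rightarrow> (nat \<Rightarrow> real) \<Rightarrow> 'a \<Rightarrow> real" where
  "riemann_sum B n p a \<omega> = (\<Sum>k<n. a k * (B (p (Suc k)) \<omega> - B (p k) \<omega>))"

definition ms_integral :: "'a measure \<Rightarrow> (real \<Rightarrow> 'a \<Rightarrow> real) \<Rightarrow> real \<Rightarrow> (real \<Rightarrow> real) \<Rightarrow> ('a \<Rightarrow> real) \<Rightarrow> bool" where
  "ms_integral M B T f X \<longleftrightarrow> X \<in> borel_measurable M \<and> integrable M (\<lambda>\<omega>. (X \<omega>)^2) \<and>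
     (\<forall>n p a. (\<forall>m. partition_of T (n m) (p m)) \<longrightarrow>
        (\<lambda>m. LBINT t:{0..T}. (step_fun (n m) (p m) (a m) t - f t)^2) \<longlonglongrightarrow> 0 \<longrightarrow>
        (\<lambda>m. \<integral>\<omega>. (riemann_sum B (n m) (p m) (a m) \<omega> - X \<omega>)^2 \<partial>M) \<longlonglongrightarrow> 0)"

end

theory Submission
  imports Defs
begin

lemma gen_amgm:
  fixes q A B :: real
  assumes "A \<ge> 0" "B \<ge> 0" "\<And>x. x > 0 \<Longrightarrow> q \<le> A * x + B / x"
  shows "q \<le> 2 * sqrt (A * B)"
proof (cases "A > 0 \<and> B > 0")
  case True
  define x where "x = sqrt (B / A)"
  have x: "x > 0" using True by (simp add: x_def)
  have "A * x = sqrt (A * B)" using True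
    by (simp add: x_def real_sqrt_divide real_sqrt_mult field_simps)
  moreover have "B / x = sqrt (A * B)" using True
    by (simp add: x_def real_sqrt_divide real_sqrt_mult field_simps)
  ultimately show ?thesis using assms(3)[OF x] by simp
next
  case False
  then have "A * B = 0" using assms by auto
  show ?thesis
  proof (rule ccontr)
    assume "\<not> ?thesis"
    then have q: "q > 0" using \<open>A * B = 0\<close> by simp
    show False
    proof (cases "A = 0")
      case True
      have "q \<le> B / ((2*B + 1) / q)" using assms(3)[of "(2*B+1)/q"] q assms True by simp
      also have "\<dots> = B * q / (2*B+1)" using q by simp
      also have "\<dots> < q" using q assms(1,2) by (simp add: field_simps) (smt (verit) mult_nonneg_nonneg)
      finally show False by simp
    next
      case F: False
      then have "B = 0" using \<open>A * B = 0\<close> by simp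
      have "q \<le> A * (q / (2*A+1))" using assms(3)[of "q/(2*A+1)"] q assms \<open>B = 0\<close> by simp
      also have "\<dots> < q" using q assms(1,2) F by (simp add: field_simps) (smt (verit) mult_nonneg_nonneg)
      finally show False by simp
    qed
  qed
qed

locale kern =
  fixes T :: real and K :: "real \<Rightarrow> real"
  assumes Tpos: "T > 0" and Kint: "set_integrable lborel {-T..T} K"
begin

definition "K0 x = indicator {-T..T} x * K x"

lemma K0_int: "integrable lborel K0"
  using Kint unfolding set_integrable_def K0_def by simp

lemma K0_meas[measurable]: "K0 \<in> borel_measurable borel"
  using borel_measurable_integrable[OF K0_int] by simp

definition "CK = (\<integral>\<^sup>+x. ennreal \<bar>K0 x\<bar> \<partial>lborel)"

lemma CK_fin: "CK < \<infinity>"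
  using K0_int unfolding CK_def integrable_iff_bounded by simp

lemma shift1: "(\<integral>\<^sup>+s. ennreal \<bar>K0 (t - s)\<bar> \<partial>lborel) = CK"
  using nn_integral_real_affine[of "\<lambda>x. ennreal \<bar>K0 x\<bar>" "-1" t] unfolding CK_def by simp

lemma shift2: "(\<integral>\<^sup>+t. ennreal \<bar>K0 (t - s)\<bar> \<partial>lborel) = CK"
  using nn_integral_real_affine[of "\<lambda>x. ennreal \<bar>K0 x\<bar>" "1" "-s"] unfolding CK_def by simp

lemma K0_shift_int: "integrable lborel (\<lambda>s. K0 (t - s))"
  using lborel_integrable_real_affine_iff[of "-1" K0 t] K0_int by simp

lemma Keq: "t \<in> {0..T} \<Longrightarrow> s \<in> {0..T} \<Longrightarrow> K (t - s) = K0 (t - s)"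
  by (auto simp: K0_def indicator_def)

definition "C = enn2real CK"
lemma CK_C: "CK = ennreal C"
  using CK_fin unfolding C_def by (simp add: less_top)
lemma C_nonneg: "C \<ge> 0" unfolding C_def by simp

end

context kern
begin

lemma abs_mult_le_half: "\<bar>x * y\<bar> \<le> (x^2 + y^2) / (2::real)"
proof -
  have "0 \<le> (\<bar>x\<bar> - \<bar>y\<bar>)^2" by simp
  then show ?thesis by (simp add: power2_diff power2_abs abs_mult)
qed

abbreviation "ind \<equiv> (indicator {0..T} :: real \<Rightarrow> real)"

definition nrm :: "(real \<Rightarrow> real) \<Rightarrow> real" where "nrm u = (LBINT t:{0..T}. (u t)^2)"
definition "J0 v t = (\<integral>s. K0 (t - s) * (ind s * v s) \<partial>lborel)"
definition "Q' u v = (\<integral>t. (ind t * u t) * J0 v t \<partial>lborel)"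

lemma ind_sq: "(ind t * x)^2 = ind t * x^2"
  by (simp add: indicator_def)

lemma L2_meas: "L2_on T u \<Longrightarrow> (\<lambda>t. ind t * u t) \<in> borel_measurable borel"
  unfolding L2_on_def set_borel_measurable_def by simp

lemma L2_int: "L2_on T u \<Longrightarrow> integrable lborel (\<lambda>t. ind t * (u t)^2)"
  unfolding L2_on_def set_integrable_def by simp

lemma L2_int': "L2_on T u \<Longrightarrow> integrable lborel (\<lambda>t. (ind t * u t)^2)"
  unfolding ind_sq by (rule L2_int)

lemma nrm_eq: "nrm u = (\<integral>t. ind t * (u t)^2 \<partial>lborel)"
  unfolding nrm_def set_lebesgue_integral_def by simp

lemma nrm_nonneg: "nrm u \<ge> 0"
  using nrm_eq[of u] by (simp add: integral_nonneg_AE)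

lemma ind_int: "integrable lborel ind"
  using Tpos by (intro integrable_real_indicator) auto

lemma L2_L1: assumes "L2_on T v" shows "integrable lborel (\<lambda>s. ind s * v s)"
proof (rule Bochner_Integration.integrable_bound)
  show "integrable lborel (\<lambda>s. (ind s + ind s * (v s)^2) / 2)"
    using L2_int[OF assms] ind_int by auto
  show "(\<lambda>s. ind s * v s) \<in> borel_measurable lborel" using L2_meas[OF assms] by simp
  show "AE x in lborel. norm (ind x * v x) \<le> norm ((ind x + ind x * (v x)\<^sup>2) / 2)"
  proof (intro AE_I2)
    fix x
    have "\<bar>v x\<bar> \<le> (1 + (v x)^2)/2"
      using abs_mult_le_half[of 1 "v x"] by simp
    moreover have "(1 + (v x)^2)/2 \<ge> 0" by simp
    ultimately show "norm (ind x * v x) \<le> norm ((ind x + ind x * (v x)\<^sup>2) / 2)"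
      by (cases "x \<in> {0..T}") auto
  qed
qed

lemma J0_meas: assumes "L2_on T v" shows "J0 v \<in> borel_measurable borel"
proof -
  have [measurable]: "(\<lambda>t. ind t * v t) \<in> borel_measurable borel" using L2_meas[OF assms] .
  have "(\<lambda>t. \<integral>s. K0 (t - s) * (ind s * v s) \<partial>lborel) \<in> borel_measurable lborel"
    by (rule lborel.borel_measurable_lebesgue_integral) measurable
  then show ?thesis unfolding J0_def by simp
qed

lemma J0_bound:
  "ennreal \<bar>J0 v t\<bar> \<le> (\<integral>\<^sup>+s. ennreal \<bar>K0 (t - s) * (ind s * v s)\<bar> \<partial>lborel)"
proof (cases "integrable lborel (\<lambda>s. K0 (t - s) * (ind s * v s))")
  case True
  then show ?thesis unfolding J0_def using integral_norm_bound_ennreal[OF True] by simp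
next
  case False
  then show ?thesis unfolding J0_def by (simp add: not_integrable_integral_eq)
qed

lemma pw_bound:
  assumes "L2_on T u" "L2_on T v"
  shows "ennreal \<bar>(ind t * u t) * J0 v t\<bar> \<le>
    (\<integral>\<^sup>+s. ennreal (\<bar>K0 (t - s)\<bar> * (ind t * (u t)^2)/2) + ennreal (\<bar>K0 (t - s)\<bar> * (ind s * (v s)^2)/2) \<partial>lborel)"
proof -
  have [measurable]: "(\<lambda>t. ind t * v t) \<in> borel_measurable borel" using L2_meas[OF assms(2)] .
  have "ennreal \<bar>(ind t * u t) * J0 v t\<bar> = ennreal \<bar>ind t * u t\<bar> * ennreal \<bar>J0 v t\<bar>"
    by (simp add: abs_mult ennreal_mult)
  also have "\<dots> \<le> ennreal \<bar>ind t * u t\<bar> * (\<integral>\<^sup>+s. ennreal \<bar>K0 (t - s) * (ind s * v s)\<bar> \<partial>lborel)"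
    by (intro mult_left_mono J0_bound) simp
  also have "\<dots> = (\<integral>\<^sup>+s. ennreal \<bar>ind t * u t\<bar> * ennreal \<bar>K0 (t - s) * (ind s * v s)\<bar> \<partial>lborel)"
    by (rule nn_integral_cmult[symmetric]) measurable
  also have "\<dots> \<le> (\<integral>\<^sup>+s. ennreal (\<bar>K0 (t - s)\<bar> * (ind t * (u t)^2)/2) + ennreal (\<bar>K0 (t - s)\<bar> * (ind s * (v s)^2)/2) \<partial>lborel)"
  proof (intro nn_integral_mono)
    fix s
    let ?a = "ind t * u t" and ?b = "ind s * v s" and ?k = "\<bar>K0 (t - s)\<bar>"
    have ab: "\<bar>?a\<bar> * \<bar>?b\<bar> \<le> (ind t * (u t)^2 + ind s * (v s)^2)/2"
      using abs_mult_le_half[of ?a ?b] unfolding ind_sq by (simp add: abs_mult)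
    have "\<bar>?a\<bar> * \<bar>K0 (t - s) * ?b\<bar> = ?k * (\<bar>?a\<bar> * \<bar>?b\<bar>)" by (simp add: abs_mult)
    also have "\<dots> \<le> ?k * ((ind t * (u t)^2 + ind s * (v s)^2)/2)" by (intro mult_left_mono ab) simp
    also have "\<dots> = ?k * (ind t * (u t)^2)/2 + ?k * (ind s * (v s)^2)/2"
      by (simp add: field_simps)
    finally have le: "\<bar>?a\<bar> * \<bar>K0 (t - s) * ?b\<bar> \<le> ?k * (ind t * (u t)^2)/2 + ?k * (ind s * (v s)^2)/2" .
    have e1: "ennreal \<bar>?a\<bar> * ennreal \<bar>K0 (t - s) * ?b\<bar> = ennreal (\<bar>?a\<bar> * \<bar>K0 (t - s) * ?b\<bar>)"
      by (simp add: ennreal_mult)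
    have e2: "ennreal (?k * (ind t * (u t)^2)/2) + ennreal (?k * (ind s * (v s)^2)/2) =
       ennreal (?k * (ind t * (u t)^2)/2 + ?k * (ind s * (v s)^2)/2)"
      by (rule ennreal_plus[symmetric]) auto
    show "ennreal \<bar>?a\<bar> * ennreal \<bar>K0 (t - s) * ?b\<bar> \<le>
       ennreal (?k * (ind t * (u t)^2)/2) + ennreal (?k * (ind s * (v s)^2)/2)"
      unfolding e1 e2 using le by (rule ennreal_leI)
  qed
  finally show ?thesis .
qed

end

context kern
begin

lemma total_bound:
  assumes u: "L2_on T u" and v: "L2_on T v"
  shows "(\<integral>\<^sup>+t. ennreal \<bar>(ind t * u t) * J0 v t\<bar> \<partial>lborel) \<le> CK * ennreal ((nrm u + nrm v)/2)"
proof -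
  define w where "w t = ind t * (u t)^2" for t
  define z where "z s = ind s * (v s)^2" for s
  have wi: "integrable lborel w" unfolding w_def using L2_int[OF u] .
  have zi: "integrable lborel z" unfolding z_def using L2_int[OF v] .
  have [measurable]: "w \<in> borel_measurable borel" "z \<in> borel_measurable borel"
    using borel_measurable_integrable[OF wi] borel_measurable_integrable[OF zi] by auto
  have w0: "w t \<ge> 0" "z t \<ge> 0" for t unfolding w_def z_def by auto
  have "(\<integral>\<^sup>+t. ennreal \<bar>(ind t * u t) * J0 v t\<bar> \<partial>lborel) \<le>
     (\<integral>\<^sup>+t. (\<integral>\<^sup>+s. ennreal (\<bar>K0 (t - s)\<bar> * w t/2) + ennreal (\<bar>K0 (t - s)\<bar> * z s/2) \<partial>lborel) \<partial>lborel)"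
    unfolding w_def z_def by (intro nn_integral_mono pw_bound u v)
  also have "\<dots> = (\<integral>\<^sup>+t. ennreal (w t/2) * CK + (\<integral>\<^sup>+s. ennreal (\<bar>K0 (t - s)\<bar> * z s/2) \<partial>lborel) \<partial>lborel)"
  proof (intro nn_integral_cong)
    fix t
    have "(\<integral>\<^sup>+s. ennreal (\<bar>K0 (t - s)\<bar> * w t/2) \<partial>lborel) = (\<integral>\<^sup>+s. ennreal (w t/2) * ennreal \<bar>K0 (t - s)\<bar> \<partial>lborel)"
      using w0 by (intro nn_integral_cong) (simp add: ennreal_mult[symmetric] mult.commute)
    also have "\<dots> = ennreal (w t/2) * CK"
      by (subst nn_integral_cmult) (auto simp: shift1)
    finally show "(\<integral>\<^sup>+s. ennreal (\<bar>K0 (t - s)\<bar> * w t/2) + ennreal (\<bar>K0 (t - s)\<bar> * z s/2) \<partial>lborel)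
      = ennreal (w t/2) * CK + (\<integral>\<^sup>+s. ennreal (\<bar>K0 (t - s)\<bar> * z s/2) \<partial>lborel)"
      by (subst nn_integral_add) auto
  qed
  also have "\<dots> = (\<integral>\<^sup>+t. ennreal (w t/2) * CK \<partial>lborel) + (\<integral>\<^sup>+t. (\<integral>\<^sup>+s. ennreal (\<bar>K0 (t - s)\<bar> * z s/2) \<partial>lborel) \<partial>lborel)"
  proof (rule nn_integral_add)
    show "(\<lambda>t. ennreal (w t / 2) * CK) \<in> borel_measurable lborel" by measurable
    have "(\<lambda>t. \<integral>\<^sup>+s. ennreal (\<bar>K0 (t - s)\<bar> * z s/2) \<partial>lborel) \<in> borel_measurable lborel"
      by (rule lborel.borel_measurable_nn_integral_fst[where f="\<lambda>(t,s). ennreal (\<bar>K0 (t - s)\<bar> * z s/2)", simplified]) measurable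
    then show "(\<lambda>t. \<integral>\<^sup>+s. ennreal (\<bar>K0 (t - s)\<bar> * z s/2) \<partial>lborel) \<in> borel_measurable lborel" .
  qed
  also have "(\<integral>\<^sup>+t. (\<integral>\<^sup>+s. ennreal (\<bar>K0 (t - s)\<bar> * z s/2) \<partial>lborel) \<partial>lborel)
      = (\<integral>\<^sup>+s. (\<integral>\<^sup>+t. ennreal (\<bar>K0 (t - s)\<bar> * z s/2) \<partial>lborel) \<partial>lborel)"
    by (rule lborel_pair.Fubini'[symmetric]) measurable
  also have "\<dots> = (\<integral>\<^sup>+s. ennreal (z s/2) * CK \<partial>lborel)"
  proof (intro nn_integral_cong)
    fix s
    have "(\<integral>\<^sup>+t. ennreal (\<bar>K0 (t - s)\<bar> * z s/2) \<partial>lborel) = (\<integral>\<^sup>+t. ennreal (z s/2) * ennreal \<bar>K0 (t - s)\<bar> \<partial>lborel)"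
      using w0 by (intro nn_integral_cong) (simp add: ennreal_mult[symmetric] mult.commute)
    also have "\<dots> = ennreal (z s/2) * CK"
      by (subst nn_integral_cmult) (auto simp: shift2)
    finally show "(\<integral>\<^sup>+t. ennreal (\<bar>K0 (t - s)\<bar> * z s/2) \<partial>lborel) = ennreal (z s/2) * CK" .
  qed
  also have "(\<integral>\<^sup>+t. ennreal (w t/2) * CK \<partial>lborel) = CK * ennreal (nrm u/2)"
  proof -
    have "(\<integral>\<^sup>+t. ennreal (w t/2) * CK \<partial>lborel) = CK * (\<integral>\<^sup>+t. ennreal (w t/2) \<partial>lborel)"
      by (subst nn_integral_cmult[symmetric]) (auto simp: mult.commute)
    also have "(\<integral>\<^sup>+t. ennreal (w t/2) \<partial>lborel) = ennreal (\<integral>t. w t/2 \<partial>lborel)"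
      using wi w0 by (intro nn_integral_eq_integral) auto
    also have "(\<integral>t. w t/2 \<partial>lborel) = nrm u / 2" unfolding nrm_eq w_def by simp
    finally show ?thesis .
  qed
  also have "(\<integral>\<^sup>+t. ennreal (z t/2) * CK \<partial>lborel) = CK * ennreal (nrm v/2)"
  proof -
    have "(\<integral>\<^sup>+t. ennreal (z t/2) * CK \<partial>lborel) = CK * (\<integral>\<^sup>+t. ennreal (z t/2) \<partial>lborel)"
      by (subst nn_integral_cmult[symmetric]) (auto simp: mult.commute)
    also have "(\<integral>\<^sup>+t. ennreal (z t/2) \<partial>lborel) = ennreal (\<integral>t. z t/2 \<partial>lborel)"
      using zi w0 by (intro nn_integral_eq_integral) auto
    also have "(\<integral>t. z t/2 \<partial>lborel) = nrm v / 2" unfolding nrm_eq z_def by simp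
    finally show ?thesis .
  qed
  also have "CK * ennreal (nrm u/2) + CK * ennreal (nrm v/2) = CK * ennreal ((nrm u + nrm v)/2)"
    using nrm_nonneg[of u] nrm_nonneg[of v]
    by (simp add: distrib_left[symmetric] ennreal_plus[symmetric] add_divide_distrib del: ennreal_plus)
  finally show ?thesis .
qed

lemma Q_int:
  assumes u: "L2_on T u" and v: "L2_on T v"
  shows "integrable lborel (\<lambda>t. (ind t * u t) * J0 v t)"
proof (rule integrableI_bounded)
  have [measurable]: "(\<lambda>t. ind t * u t) \<in> borel_measurable borel" "J0 v \<in> borel_measurable borel"
    using L2_meas[OF u] J0_meas[OF v] by auto
  show "(\<lambda>t. (ind t * u t) * J0 v t) \<in> borel_measurable lborel" by measurable
  have "(\<integral>\<^sup>+t. ennreal (norm ((ind t * u t) * J0 v t)) \<partial>lborel) \<le> CK * ennreal ((nrm u + nrm v)/2)"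
    using total_bound[OF u v] by simp
  also have "\<dots> < \<infinity>" using CK_fin by (simp add: ennreal_mult_less_top)
  finally show "(\<integral>\<^sup>+t. ennreal (norm ((ind t * u t) * J0 v t)) \<partial>lborel) < \<infinity>" .
qed

lemma Q_bound:
  assumes u: "L2_on T u" and v: "L2_on T v"
  shows "\<bar>Q' u v\<bar> \<le> C * ((nrm u + nrm v)/2)"
proof -
  have "ennreal \<bar>Q' u v\<bar> \<le> (\<integral>\<^sup>+t. ennreal (norm ((ind t * u t) * J0 v t)) \<partial>lborel)"
    unfolding Q'_def using integral_norm_bound_ennreal[OF Q_int[OF u v]] by simp
  also have "\<dots> \<le> CK * ennreal ((nrm u + nrm v)/2)"
    using total_bound[OF u v] by simp
  also have "\<dots> = ennreal (C * ((nrm u + nrm v)/2))"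
    unfolding CK_C using C_nonneg nrm_nonneg[of u] nrm_nonneg[of v] by (intro ennreal_mult[symmetric]) auto
  finally show ?thesis
    using C_nonneg nrm_nonneg[of u] nrm_nonneg[of v] by (subst (asm) ennreal_le_iff) auto
qed

lemma AE_inner:
  assumes v: "L2_on T v"
  shows "AE t in lborel. integrable lborel (\<lambda>s. K0 (t - s) * (ind s * v s))"
proof -
  have vi: "integrable lborel (\<lambda>s. ind s * v s)" using L2_L1[OF v] .
  have [measurable]: "(\<lambda>s. ind s * v s) \<in> borel_measurable borel"
    using L2_meas[OF v] by simp
  have "(\<integral>\<^sup>+t. (\<integral>\<^sup>+s. ennreal \<bar>K0 (t - s) * (ind s * v s)\<bar> \<partial>lborel) \<partial>lborel)
      = (\<integral>\<^sup>+s. (\<integral>\<^sup>+t. ennreal \<bar>K0 (t - s) * (ind s * v s)\<bar> \<partial>lborel) \<partial>lborel)"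
    by (rule lborel_pair.Fubini'[symmetric]) measurable
  also have "\<dots> = (\<integral>\<^sup>+s. ennreal \<bar>ind s * v s\<bar> * CK \<partial>lborel)"
  proof (intro nn_integral_cong)
    fix s
    have "(\<integral>\<^sup>+t. ennreal \<bar>K0 (t - s) * (ind s * v s)\<bar> \<partial>lborel) = (\<integral>\<^sup>+t. ennreal \<bar>ind s * v s\<bar> * ennreal \<bar>K0 (t - s)\<bar> \<partial>lborel)"
      by (intro nn_integral_cong) (simp add: ennreal_mult[symmetric] abs_mult mult.commute)
    also have "\<dots> = ennreal \<bar>ind s * v s\<bar> * CK"
      by (subst nn_integral_cmult) (auto simp: shift2)
    finally show "(\<integral>\<^sup>+t. ennreal \<bar>K0 (t - s) * (ind s * v s)\<bar> \<partial>lborel) = ennreal \<bar>ind s * v s\<bar> * CK" .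
  qed
  also have "\<dots> = CK * (\<integral>\<^sup>+s. ennreal \<bar>ind s * v s\<bar> \<partial>lborel)"
  proof -
    have mm: "(\<lambda>s. ennreal \<bar>ind s * v s\<bar>) \<in> borel_measurable lborel" by measurable
    show ?thesis using nn_integral_cmult[OF mm, of CK] by (simp add: mult.commute)
  qed
  also have "\<dots> < \<infinity>" using CK_fin vi unfolding integrable_iff_bounded
    by (simp add: ennreal_mult_less_top)
  finally have fin: "(\<integral>\<^sup>+t. (\<integral>\<^sup>+s. ennreal \<bar>K0 (t - s) * (ind s * v s)\<bar> \<partial>lborel) \<partial>lborel) \<noteq> \<infinity>" by simp
  have "AE t in lborel. (\<integral>\<^sup>+s. ennreal \<bar>K0 (t - s) * (ind s * v s)\<bar> \<partial>lborel) \<noteq> \<infinity>"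
  proof (rule nn_integral_PInf_AE[OF _ fin])
    show "(\<lambda>t. \<integral>\<^sup>+s. ennreal \<bar>K0 (t - s) * (ind s * v s)\<bar> \<partial>lborel) \<in> borel_measurable lborel"
      by (rule lborel.borel_measurable_nn_integral_fst[where f="\<lambda>(t,s). ennreal \<bar>K0 (t - s) * (ind s * v s)\<bar>", simplified]) measurable
  qed
  then show ?thesis
  proof (rule AE_mp, intro AE_I2 impI)
    fix t assume "(\<integral>\<^sup>+s. ennreal \<bar>K0 (t - s) * (ind s * v s)\<bar> \<partial>lborel) \<noteq> \<infinity>"
    then show "integrable lborel (\<lambda>s. K0 (t - s) * (ind s * v s))"
      by (intro integrableI_bounded) (auto simp: less_top)
  qed
qed

lemma L2_diff:
  assumes u: "L2_on T u" and v: "L2_on T v"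
  shows "L2_on T (\<lambda>t. u t - v t)"
proof -
  have [measurable]: "(\<lambda>t. ind t * u t) \<in> borel_measurable borel" "(\<lambda>t. ind t * v t) \<in> borel_measurable borel"
    using L2_meas[OF u] L2_meas[OF v] by auto
  have m: "(\<lambda>t. ind t * (u t - v t)) \<in> borel_measurable borel"
  proof -
    have "(\<lambda>t. ind t * u t - ind t * v t) \<in> borel_measurable borel" by measurable
    then show ?thesis by (simp add: right_diff_distrib)
  qed
  have "integrable lborel (\<lambda>t. ind t * (u t - v t)^2)"
  proof (rule Bochner_Integration.integrable_bound)
    show "integrable lborel (\<lambda>t. 2 * (ind t * (u t)^2) + 2 * (ind t * (v t)^2))"
      using L2_int[OF u] L2_int[OF v] by auto
    have "(\<lambda>t. (ind t * (u t - v t))^2) \<in> borel_measurable borel" using m by measurable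
    then show "(\<lambda>t. ind t * (u t - v t)^2) \<in> borel_measurable lborel" by (simp add: ind_sq)
    show "AE x in lborel. norm (ind x * (u x - v x)\<^sup>2) \<le> norm (2 * (ind x * (u x)\<^sup>2) + 2 * (ind x * (v x)\<^sup>2))"
    proof (intro AE_I2)
      fix x
      have "(u x - v x)^2 \<le> 2 * (u x)^2 + 2 * (v x)^2"
        using abs_mult_le_half[of "u x" "v x"] by (simp add: power2_diff abs_le_iff)
      then show "norm (ind x * (u x - v x)\<^sup>2) \<le> norm (2 * (ind x * (u x)\<^sup>2) + 2 * (ind x * (v x)\<^sup>2))"
        by (cases "x \<in> {0..T}") auto
    qed
  qed
  with m show ?thesis unfolding L2_on_def set_borel_measurable_def set_integrable_def by simp
qed

lemma L2_scale:
  assumes u: "L2_on T u"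
  shows "L2_on T (\<lambda>t. c * u t)"
proof -
  have [measurable]: "(\<lambda>t. ind t * u t) \<in> borel_measurable borel"
    using L2_meas[OF u] by auto
  have m: "(\<lambda>t. ind t * (c * u t)) \<in> borel_measurable borel"
  proof -
    have "(\<lambda>t. c * (ind t * u t)) \<in> borel_measurable borel" by measurable
    then show ?thesis by (simp add: ac_simps)
  qed
  have "integrable lborel (\<lambda>t. c^2 * (ind t * (u t)^2))" using L2_int[OF u] by simp
  then have "integrable lborel (\<lambda>t. ind t * (c * u t)^2)" by (simp add: power_mult_distrib ac_simps)
  with m show ?thesis unfolding L2_on_def set_borel_measurable_def set_integrable_def by simp
qed

lemma nrm_scale: "nrm (\<lambda>t. c * u t) = c^2 * nrm u"
proof -
  have "(\<lambda>t. ind t * (c * u t)^2) = (\<lambda>t. c^2 * (ind t * (u t)^2))"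
    by (simp add: power_mult_distrib fun_eq_iff)
  then show ?thesis unfolding nrm_eq by simp
qed

lemma Q'_diff1:
  assumes "L2_on T u1" "L2_on T u2" "L2_on T v"
  shows "Q' (\<lambda>t. u1 t - u2 t) v = Q' u1 v - Q' u2 v"
proof -
  have "Q' (\<lambda>t. u1 t - u2 t) v = (\<integral>t. (ind t * u1 t) * J0 v t - (ind t * u2 t) * J0 v t \<partial>lborel)"
    unfolding Q'_def by (simp add: algebra_simps)
  also have "\<dots> = Q' u1 v - Q' u2 v"
    unfolding Q'_def by (rule Bochner_Integration.integral_diff) (auto intro!: Q_int assms)
  finally show ?thesis .
qed

lemma Q'_diff2:
  assumes u: "L2_on T u" and v1: "L2_on T v1" and v2: "L2_on T v2"
  shows "Q' u (\<lambda>s. v1 s - v2 s) = Q' u v1 - Q' u v2"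
proof -
  have "AE t in lborel. J0 (\<lambda>s. v1 s - v2 s) t = J0 v1 t - J0 v2 t"
    using AE_inner[OF v1] AE_inner[OF v2]
  proof eventually_elim
    case (elim t)
    have "J0 (\<lambda>s. v1 s - v2 s) t = (\<integral>s. K0 (t - s) * (ind s * v1 s) - K0 (t - s) * (ind s * v2 s) \<partial>lborel)"
      unfolding J0_def by (simp add: algebra_simps)
    also have "\<dots> = J0 v1 t - J0 v2 t"
      unfolding J0_def using elim by (rule Bochner_Integration.integral_diff)
    finally show ?case .
  qed
  then have ae: "AE t in lborel. (ind t * u t) * J0 (\<lambda>s. v1 s - v2 s) t = (ind t * u t) * J0 v1 t - (ind t * u t) * J0 v2 t"
    by eventually_elim (metis right_diff_distrib)
  have [measurable]: "(\<lambda>t. ind t * u t) \<in> borel_measurable borel" "J0 v1 \<in> borel_measurable borel"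
    "J0 v2 \<in> borel_measurable borel" "J0 (\<lambda>s. v1 s - v2 s) \<in> borel_measurable borel"
    using L2_meas[OF u] J0_meas[OF v1] J0_meas[OF v2] J0_meas[OF L2_diff[OF v1 v2]] by auto
  have m1: "(\<lambda>t. (ind t * u t) * J0 (\<lambda>s. v1 s - v2 s) t) \<in> borel_measurable lborel" by measurable
  have m2: "(\<lambda>t. (ind t * u t) * J0 v1 t - (ind t * u t) * J0 v2 t) \<in> borel_measurable lborel" by measurable
  have "Q' u (\<lambda>s. v1 s - v2 s) = (\<integral>t. (ind t * u t) * J0 v1 t - (ind t * u t) * J0 v2 t \<partial>lborel)"
    unfolding Q'_def using m1 m2 ae by (rule integral_cong_AE)
  also have "\<dots> = Q' u v1 - Q' u v2"
    unfolding Q'_def by (rule Bochner_Integration.integral_diff) (auto intro!: Q_int assms)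
  finally show ?thesis .
qed

lemma Q'_scale1: "Q' (\<lambda>t. c * u t) v = c * Q' u v"
  unfolding Q'_def by (simp add: ac_simps)

lemma J0_scale: "J0 (\<lambda>s. c * v s) t = c * J0 v t"
  unfolding J0_def by (simp add: ac_simps)

lemma Q'_scale2: "Q' u (\<lambda>s. c * v s) = c * Q' u v"
  unfolding Q'_def J0_scale by (simp add: ac_simps)

lemma Q_prod_bound:
  assumes u: "L2_on T u" and v: "L2_on T v"
  shows "\<bar>Q' u v\<bar> \<le> C * sqrt (nrm u) * sqrt (nrm v)"
proof -
  have "\<bar>Q' u v\<bar> \<le> 2 * sqrt ((C * nrm u / 2) * (C * nrm v / 2))"
  proof (rule gen_amgm)
    show "0 \<le> C * nrm u / 2" "0 \<le> C * nrm v / 2" using C_nonneg nrm_nonneg by auto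
    fix x :: real assume x: "x > 0"
    define r where "r = sqrt x"
    have r: "r > 0" "r^2 = x" using x by (auto simp: r_def)
    have "Q' u v = Q' (\<lambda>t. r * u t) (\<lambda>s. (1/r) * v s)"
      using r by (simp only: Q'_scale1 Q'_scale2) simp
    also have "\<bar>\<dots>\<bar> \<le> C * ((nrm (\<lambda>t. r * u t) + nrm (\<lambda>s. (1/r) * v s))/2)"
      by (intro Q_bound L2_scale u v)
    also have "\<dots> = C * nrm u / 2 * x + C * nrm v / 2 / x"
      unfolding nrm_scale using r by (simp add: field_simps power_one_over)
    finally show "\<bar>Q' u v\<bar> \<le> C * nrm u / 2 * x + C * nrm v / 2 / x" .
  qed
  also have "\<dots> = C * sqrt (nrm u) * sqrt (nrm v)"
    using C_nonneg nrm_nonneg[of u] nrm_nonneg[of v]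
    by (simp add: real_sqrt_mult real_sqrt_divide)
  finally show ?thesis .
qed

lemma nrm_tri:
  assumes "L2_on T u" "L2_on T v" "L2_on T w"
  shows "nrm (\<lambda>t. u t - v t) \<le> 2 * nrm (\<lambda>t. u t - w t) + 2 * nrm (\<lambda>t. v t - w t)"
proof -
  have i: "integrable lborel (\<lambda>t. ind t * (u t - w t)^2)" "integrable lborel (\<lambda>t. ind t * (v t - w t)^2)"
    "integrable lborel (\<lambda>t. ind t * (u t - v t)^2)"
    using L2_int[OF L2_diff] assms by blast+
  have "nrm (\<lambda>t. u t - v t) \<le> (\<integral>t. 2 * (ind t * (u t - w t)^2) + 2 * (ind t * (v t - w t)^2) \<partial>lborel)"
    unfolding nrm_eq
  proof (rule integral_mono)
    fix t
    have "2 * (u t - w t)^2 + 2 * (v t - w t)^2 - (u t - v t)^2 = (u t + v t - 2 * w t)^2"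
      by (simp add: power2_eq_square algebra_simps)
    then have "(u t - v t)^2 \<le> 2 * (u t - w t)^2 + 2 * (v t - w t)^2"
      by (smt (verit) zero_le_power2)
    then show "ind t * (u t - v t)^2 \<le> 2 * (ind t * (u t - w t)^2) + 2 * (ind t * (v t - w t)^2)"
      by (cases "t \<in> {0..T}") auto
  qed (use i in auto)
  also have "\<dots> = 2 * nrm (\<lambda>t. u t - w t) + 2 * nrm (\<lambda>t. v t - w t)"
    unfolding nrm_eq using i by simp
  finally show ?thesis .
qed

end

context kern
begin

lemma Q_eq: "(LBINT t:{0..T}. f t * (LBINT s:{0..T}. K (t - s) * g s)) = Q' f g"
  unfolding Q'_def set_lebesgue_integral_def
proof (intro Bochner_Integration.integral_cong refl)
  fix t
  show "ind t *\<^sub>R (f t * (LBINT s. ind s *\<^sub>R (K (t - s) * g s))) = ind t * f t * J0 g t"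
  proof (cases "t \<in> {0..T}")
    case True
    have "(LBINT s. ind s *\<^sub>R (K (t - s) * g s)) = J0 g t"
      unfolding J0_def
    proof (intro Bochner_Integration.integral_cong refl)
      fix s show "ind s *\<^sub>R (K (t - s) * g s) = K0 (t - s) * (ind s * g s)"
        using Keq[OF True, of s] by (cases "s \<in> {0..T}") auto
    qed
    then show ?thesis by simp
  qed simp
qed

definition "cc x y = (LBINT u:{0..x}. LBINT v:{0..y}. K (u - v))"
definition "F y t = (\<integral>s. K0 (t - s) * indicator {0..y} s \<partial>lborel)"

lemma F_int: "integrable lborel (\<lambda>s. K0 (t - s) * indicator {0..y} s)"
  using integrable_mult_indicator[OF _ K0_shift_int[of t], of "{0..y}"] by (simp add: mult.commute)

lemma F_meas[measurable]: "F y \<in> borel_measurable borel"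
proof -
  have "(\<lambda>t. \<integral>s. K0 (t - s) * indicator {0..y} s \<partial>lborel) \<in> borel_measurable lborel"
    by (rule lborel.borel_measurable_lebesgue_integral) measurable
  then show ?thesis unfolding F_def by simp
qed

lemma C_eq: "(\<integral>s. \<bar>K0 (t - s)\<bar> \<partial>lborel) = C"
proof -
  have "ennreal (\<integral>s. \<bar>K0 (t - s)\<bar> \<partial>lborel) = (\<integral>\<^sup>+s. ennreal \<bar>K0 (t - s)\<bar> \<partial>lborel)"
    using K0_shift_int[of t] by (intro nn_integral_eq_integral[symmetric]) auto
  also have "\<dots> = ennreal C" using shift1 CK_C by simp
  finally show ?thesis using C_nonneg by (simp add: integral_nonneg_AE)
qed

lemma F_bound: "\<bar>F y t\<bar> \<le> C"
proof -
  have "\<bar>F y t\<bar> \<le> (\<integral>s. norm (K0 (t - s) * indicator {0..y} s) \<partial>lborel)"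
    unfolding F_def using integral_norm_bound[of lborel "\<lambda>s. K0 (t - s) * indicator {0..y} s"] by simp
  also have "\<dots> \<le> (\<integral>s. \<bar>K0 (t - s)\<bar> \<partial>lborel)"
    using integrable_abs[OF F_int[of t y]] integrable_abs[OF K0_shift_int[of t]]
    by (intro integral_mono) (auto simp: abs_mult indicator_def)
  finally show ?thesis using C_eq by simp
qed

lemma RF_int: "integrable lborel (\<lambda>t. indicator {0..x} t * F y t)"
proof (rule Bochner_Integration.integrable_bound)
  have "integrable lborel (indicator {0..x} :: real \<Rightarrow> real)"
    by (intro integrable_real_indicator) (auto simp: emeasure_lborel_Icc_eq)
  then show "integrable lborel (\<lambda>t. C * indicator {0..x} t)" by simp
  show "(\<lambda>t. indicator {0..x} t * F y t) \<in> borel_measurable lborel" by measurable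
  show "AE t in lborel. norm (indicator {0..x} t * F y t) \<le> norm (C * indicator {0..x} t)"
    using F_bound[of y] C_nonneg by (intro AE_I2) (auto simp: indicator_def)
qed

lemma RF_eq:
  assumes "x \<in> {0..T}" "y \<in> {0..T}"
  shows "(\<integral>t. indicator {0..x} t * F y t \<partial>lborel) = cc x y"
  unfolding cc_def set_lebesgue_integral_def
proof (intro Bochner_Integration.integral_cong refl)
  fix t
  show "indicator {0..x} t * F y t = indicator {0..x} t *\<^sub>R (LBINT s. indicator {0..y} s *\<^sub>R K (t - s))"
  proof (cases "t \<in> {0..x}")
    case True
    have "F y t = (LBINT s. indicator {0..y} s *\<^sub>R K (t - s))"
      unfolding F_def
    proof (intro Bochner_Integration.integral_cong refl)
      fix s show "K0 (t - s) * indicator {0..y} s = indicator {0..y} s *\<^sub>R K (t - s)"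
        using Keq[of t s] True assms by (cases "s \<in> {0..y}") auto
    qed
    then show ?thesis by simp
  qed simp
qed

lemma DG:
  assumes "x \<in> {0..T}" "x' \<in> {0..T}" "y \<in> {0..T}" "y' \<in> {0..T}"
  shows "integrable lborel (\<lambda>t. (indicator {0..x'} t - indicator {0..x} t) * (F y' t - F y t))"
    "(\<integral>t. (indicator {0..x'} t - indicator {0..x} t) * (F y' t - F y t) \<partial>lborel)
       = cc x' y' - cc x' y - cc x y' + cc x y"
proof -
  have e: "(\<lambda>t. (indicator {0..x'} t - indicator {0..x} t) * (F y' t - F y t)) =
    (\<lambda>t. ((indicator {0..x'} t * F y' t - indicator {0..x'} t * F y t) -
          indicator {0..x} t * F y' t) + indicator {0..x} t * F y t)"
    by (simp add: fun_eq_iff algebra_simps)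
  show "integrable lborel (\<lambda>t. (indicator {0..x'} t - indicator {0..x} t) * (F y' t - F y t))"
    unfolding e by (intro Bochner_Integration.integrable_add Bochner_Integration.integrable_diff RF_int)
  show "(\<integral>t. (indicator {0..x'} t - indicator {0..x} t) * (F y' t - F y t) \<partial>lborel)
       = cc x' y' - cc x' y - cc x y' + cc x y"
    unfolding e using assms
    by (simp add: Bochner_Integration.integral_add Bochner_Integration.integral_diff RF_int RF_eq)
qed

lemma indR: "x \<le> T \<Longrightarrow> ind t * indicator {0..x} t = indicator {0..x} t"
  by (auto simp: indicator_def)

lemma J0_combo:
  assumes "finite J" "\<And>j. j \<in> J \<Longrightarrow> y j \<in> {0..T} \<and> y' j \<in> {0..T}"
  shows "J0 (\<lambda>s. \<Sum>j\<in>J. b j * (indicator {0..y' j} s - indicator {0..y j} s)) t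
       = (\<Sum>j\<in>J. b j * (F (y' j) t - F (y j) t))"
proof -
  have "J0 (\<lambda>s. \<Sum>j\<in>J. b j * (indicator {0..y' j} s - indicator {0..y j} s)) t
     = (\<integral>s. (\<Sum>j\<in>J. b j * (K0 (t - s) * indicator {0..y' j} s) - b j * (K0 (t - s) * indicator {0..y j} s)) \<partial>lborel)"
    unfolding J0_def
  proof (intro Bochner_Integration.integral_cong refl)
    fix s
    have "ind s * (\<Sum>j\<in>J. b j * (indicator {0..y' j} s - indicator {0..y j} s))
       = (\<Sum>j\<in>J. b j * (ind s * indicator {0..y' j} s - ind s * indicator {0..y j} s))"
      by (simp add: sum_distrib_left algebra_simps)
    also have "\<dots> = (\<Sum>j\<in>J. b j * (indicator {0..y' j} s - indicator {0..y j} s))"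
      using assms(2) by (intro sum.cong refl) (simp add: indR)
    finally show "K0 (t - s) * (ind s * (\<Sum>j\<in>J. b j * (indicator {0..y' j} s - indicator {0..y j} s)))
      = (\<Sum>j\<in>J. b j * (K0 (t - s) * indicator {0..y' j} s) - b j * (K0 (t - s) * indicator {0..y j} s))"
      by (simp add: sum_distrib_left algebra_simps)
  qed
  also have "\<dots> = (\<Sum>j\<in>J. b j * (F (y' j) t - F (y j) t))"
  proof -
    have "(\<integral>s. (\<Sum>j\<in>J. b j * (K0 (t - s) * indicator {0..y' j} s) - b j * (K0 (t - s) * indicator {0..y j} s)) \<partial>lborel)
      = (\<Sum>j\<in>J. \<integral>s. b j * (K0 (t - s) * indicator {0..y' j} s) - b j * (K0 (t - s) * indicator {0..y j} s) \<partial>lborel)"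
      by (rule Bochner_Integration.integral_sum) (use F_int in auto)
    also have "\<dots> = (\<Sum>j\<in>J. b j * (F (y' j) t - F (y j) t))"
    proof (intro sum.cong refl)
      fix j
      show "(\<integral>s. b j * (K0 (t - s) * indicator {0..y' j} s) - b j * (K0 (t - s) * indicator {0..y j} s) \<partial>lborel)
        = b j * (F (y' j) t - F (y j) t)"
        unfolding F_def
        by (subst Bochner_Integration.integral_diff) (use F_int in \<open>auto simp: right_diff_distrib\<close>)
    qed
    finally show ?thesis .
  qed
  finally show ?thesis .
qed

lemma Q_combo:
  assumes "finite I" "\<And>i. i \<in> I \<Longrightarrow> x i \<in> {0..T} \<and> x' i \<in> {0..T}"
    "finite J" "\<And>j. j \<in> J \<Longrightarrow> y j \<in> {0..T} \<and> y' j \<in> {0..T}"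
  shows "Q' (\<lambda>t. \<Sum>i\<in>I. a i * (indicator {0..x' i} t - indicator {0..x i} t))
            (\<lambda>s. \<Sum>j\<in>J. b j * (indicator {0..y' j} s - indicator {0..y j} s))
       = (\<Sum>i\<in>I. \<Sum>j\<in>J. a i * b j * (cc (x' i) (y' j) - cc (x' i) (y j) - cc (x i) (y' j) + cc (x i) (y j)))"
proof -
  let ?D = "\<lambda>i t. indicator {0..x' i} t - indicator {0..x i} t"
  let ?G = "\<lambda>j t. F (y' j) t - F (y j) t"
  have "Q' (\<lambda>t. \<Sum>i\<in>I. a i * ?D i t) (\<lambda>s. \<Sum>j\<in>J. b j * (indicator {0..y' j} s - indicator {0..y j} s))
     = (\<integral>t. (\<Sum>i\<in>I. \<Sum>j\<in>J. a i * b j * (?D i t * ?G j t)) \<partial>lborel)"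
    unfolding Q'_def
  proof (intro Bochner_Integration.integral_cong refl)
    fix t
    have "ind t * (\<Sum>i\<in>I. a i * ?D i t) = (\<Sum>i\<in>I. a i * (ind t * indicator {0..x' i} t - ind t * indicator {0..x i} t))"
      by (simp add: sum_distrib_left algebra_simps)
    also have "\<dots> = (\<Sum>i\<in>I. a i * ?D i t)"
      using assms(2) by (intro sum.cong refl) (simp add: indR)
    finally have A: "ind t * (\<Sum>i\<in>I. a i * ?D i t) = (\<Sum>i\<in>I. a i * ?D i t)" .
    have J: "J0 (\<lambda>s. \<Sum>j\<in>J. b j * (indicator {0..y' j} s - indicator {0..y j} s)) t = (\<Sum>j\<in>J. b j * ?G j t)"
      by (rule J0_combo[OF assms(3,4)])
    show "ind t * (\<Sum>i\<in>I. a i * ?D i t) * J0 (\<lambda>s. \<Sum>j\<in>J. b j * (indicator {0..y' j} s - indicator {0..y j} s)) t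
      = (\<Sum>i\<in>I. \<Sum>j\<in>J. a i * b j * (?D i t * ?G j t))"
      unfolding A J sum_product by (intro sum.cong refl) (simp add: ac_simps)
  qed
  also have "\<dots> = (\<Sum>i\<in>I. \<Sum>j\<in>J. a i * b j * (\<integral>t. ?D i t * ?G j t \<partial>lborel))"
    using DG(1) assms by (simp add: Bochner_Integration.integral_sum Bochner_Integration.integrable_sum)
  also have "\<dots> = (\<Sum>i\<in>I. \<Sum>j\<in>J. a i * b j * (cc (x' i) (y' j) - cc (x' i) (y j) - cc (x i) (y' j) + cc (x i) (y j)))"
    using DG(2) assms by (intro sum.cong refl) simp
  finally show ?thesis .
qed

end

definition sqi :: "'a measure \<Rightarrow> ('a \<Rightarrow> real) \<Rightarrow> bool" where "sqi M X \<longleftrightarrow> X \<in> borel_measurable M \<and> integrable M (\<lambda>\<omega>. (X \<omega>)^2)"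

lemma abs_mult_le_half2: "\<bar>x * y\<bar> \<le> (x^2 + y^2) / (2::real)"
proof -
  have "0 \<le> (\<bar>x\<bar> - \<bar>y\<bar>)^2" by simp
  then show ?thesis by (simp add: power2_diff power2_abs abs_mult)
qed

lemma sqi_mult_int:
  assumes "sqi M X" "sqi M Y" shows "integrable M (\<lambda>\<omega>. X \<omega> * Y \<omega>)"
proof (rule Bochner_Integration.integrable_bound)
  show "integrable M (\<lambda>\<omega>. ((X \<omega>)^2 + (Y \<omega>)^2) / 2)" using assms unfolding sqi_def by auto
  show "(\<lambda>\<omega>. X \<omega> * Y \<omega>) \<in> borel_measurable M" using assms unfolding sqi_def by auto
  show "AE \<omega> in M. norm (X \<omega> * Y \<omega>) \<le> norm (((X \<omega>)^2 + (Y \<omega>)^2) / 2)"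
    using abs_mult_le_half2 by (intro AE_I2) auto
qed

lemma sqi_add: assumes "sqi M X" "sqi M Y" shows "sqi M (\<lambda>\<omega>. X \<omega> + Y \<omega>)"
proof -
  have "integrable M (\<lambda>\<omega>. (X \<omega>)^2 + 2 * (X \<omega> * Y \<omega>) + (Y \<omega>)^2)"
    using assms sqi_mult_int[OF assms] unfolding sqi_def by auto
  moreover have "(\<lambda>\<omega>. X \<omega> + Y \<omega>) \<in> borel_measurable M" using assms unfolding sqi_def by auto
  ultimately show ?thesis unfolding sqi_def by (simp add: power2_sum ac_simps)
qed

lemma sqi_scale: assumes "sqi M X" shows "sqi M (\<lambda>\<omega>. c * X \<omega>)"
proof -
  have "integrable M (\<lambda>\<omega>. c^2 * (X \<omega>)^2)" using assms unfolding sqi_def by auto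
  moreover have "(\<lambda>\<omega>. c * X \<omega>) \<in> borel_measurable M" using assms unfolding sqi_def by auto
  ultimately show ?thesis unfolding sqi_def by (simp add: power_mult_distrib)
qed

lemma sqi_diff: assumes "sqi M X" "sqi M Y" shows "sqi M (\<lambda>\<omega>. X \<omega> - Y \<omega>)"
proof -
  have "sqi M (\<lambda>\<omega>. X \<omega> + (-1) * Y \<omega>)" by (rule sqi_add[OF assms(1) sqi_scale[OF assms(2)]])
  then show ?thesis by simp
qed

lemma sqi_sum: assumes "finite I" "\<And>i. i \<in> I \<Longrightarrow> sqi M (X i)" shows "sqi M (\<lambda>\<omega>. \<Sum>i\<in>I. X i \<omega>)"
  using assms
proof (induction I rule: finite_induct)
  case empty then show ?case by (simp add: sqi_def)
next
  case (insert x F) then show ?case by (simp add: sqi_add)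
qed

lemma partition_range:
  assumes "partition_of T n p" "k \<le> n" shows "p k \<in> {0..T}"
proof -
  have mono: "p i \<le> p (i + d)" if "i + d \<le> n" for i d
    using that
  proof (induction d)
    case (Suc d)
    then have "p (i + d) < p (Suc (i + d))" using assms(1) unfolding partition_of_def by auto
    with Suc show ?case by simp
  qed simp
  have "p 0 \<le> p k" using mono[of 0 k] assms by simp
  moreover have "p k \<le> p n" using mono[of k "n - k"] assms by simp
  ultimately show ?thesis using assms(1) unfolding partition_of_def by simp
qed

lemma step_fun_eq:
  assumes "partition_of T n p"
  shows "step_fun n p a = (\<lambda>t. \<Sum>k<n. a k * (indicator {0..p (Suc k)} t - indicator {0..p k} t))"
proof -
  have "indicator {p k<..p (Suc k)} t = (indicator {0..p (Suc k)} t - indicator {0..p k} t :: real)"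
    if "k < n" for k t
  proof -
    have "0 \<le> p k" "p k < p (Suc k)"
      using partition_range[OF assms, of k] that assms unfolding partition_of_def by auto
    then show ?thesis by (auto simp: indicator_def)
  qed
  then show ?thesis unfolding step_fun_def by (auto simp: fun_eq_iff)
qed

locale proc = kern +
  fixes M :: "'a measure" and B :: "real \<Rightarrow> 'a \<Rightarrow> real"
  assumes ps: "prob_space M"
    and Bsqi: "\<And>t. t \<in> {0..T} \<Longrightarrow> sqi M (B t)"
    and cov: "\<And>s t. s \<in> {0..T} \<Longrightarrow> t \<in> {0..T} \<Longrightarrow> (\<integral>\<omega>. B t \<omega> * B s \<omega> \<partial>M) = cc t s"
begin

lemma E_combo:
  assumes "finite I" "\<And>i. i \<in> I \<Longrightarrow> x i \<in> {0..T} \<and> x' i \<in> {0..T}"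
    "finite J" "\<And>j. j \<in> J \<Longrightarrow> y j \<in> {0..T} \<and> y' j \<in> {0..T}"
  shows "(\<integral>\<omega>. (\<Sum>i\<in>I. a i * (B (x' i) \<omega> - B (x i) \<omega>)) * (\<Sum>j\<in>J. b j * (B (y' j) \<omega> - B (y j) \<omega>)) \<partial>M)
       = (\<Sum>i\<in>I. \<Sum>j\<in>J. a i * b j * (cc (x' i) (y' j) - cc (x' i) (y j) - cc (x i) (y' j) + cc (x i) (y j)))"
proof -
  have int: "integrable M (\<lambda>\<omega>. B u \<omega> * B v \<omega>)" if "u \<in> {0..T}" "v \<in> {0..T}" for u v
    using sqi_mult_int[OF Bsqi Bsqi] that by blast
  have "(\<integral>\<omega>. (\<Sum>i\<in>I. a i * (B (x' i) \<omega> - B (x i) \<omega>)) * (\<Sum>j\<in>J. b j * (B (y' j) \<omega> - B (y j) \<omega>)) \<partial>M)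
    = (\<integral>\<omega>. (\<Sum>i\<in>I. \<Sum>j\<in>J. a i * b j * (B (x' i) \<omega> * B (y' j) \<omega> - B (x' i) \<omega> * B (y j) \<omega>
          - B (x i) \<omega> * B (y' j) \<omega> + B (x i) \<omega> * B (y j) \<omega>)) \<partial>M)"
    unfolding sum_product by (intro Bochner_Integration.integral_cong refl sum.cong) (simp add: algebra_simps)
  also have "\<dots> = (\<Sum>i\<in>I. \<Sum>j\<in>J. a i * b j * ((\<integral>\<omega>. B (x' i) \<omega> * B (y' j) \<omega> \<partial>M) - (\<integral>\<omega>. B (x' i) \<omega> * B (y j) \<omega> \<partial>M)
          - (\<integral>\<omega>. B (x i) \<omega> * B (y' j) \<omega> \<partial>M) + (\<integral>\<omega>. B (x i) \<omega> * B (y j) \<omega> \<partial>M)))"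
    using assms int
    by (simp add: Bochner_Integration.integral_sum Bochner_Integration.integrable_sum
        Bochner_Integration.integral_add Bochner_Integration.integral_diff)
  also have "\<dots> = (\<Sum>i\<in>I. \<Sum>j\<in>J. a i * b j * (cc (x' i) (y' j) - cc (x' i) (y j) - cc (x i) (y' j) + cc (x i) (y j)))"
    using assms by (intro sum.cong refl) (simp add: cov)
  finally show ?thesis .
qed

lemma EQ:
  assumes p: "partition_of T n p" and q: "partition_of T n' q"
  shows "(\<integral>\<omega>. riemann_sum B n p a \<omega> * riemann_sum B n' q b \<omega> \<partial>M) = Q' (step_fun n p a) (step_fun n' q b)"
  unfolding riemann_sum_def step_fun_eq[OF p] step_fun_eq[OF q]
  using partition_range[OF p] partition_range[OF q]
  by (subst E_combo, simp, force, simp, force, subst Q_combo, simp, force, simp, force) (rule refl)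

end

lemma L2_complete:
  assumes ps: "prob_space M" and Y: "\<And>m. sqi M (Y m)"
    and cau: "\<And>e. e > 0 \<Longrightarrow> \<exists>N. \<forall>m\<ge>N. \<forall>k\<ge>N. (\<integral>\<omega>. (Y m \<omega> - Y k \<omega>)^2 \<partial>M) < e"
  shows "\<exists>X. sqi M X \<and> (\<lambda>m. \<integral>\<omega>. (Y m \<omega> - X \<omega>)^2 \<partial>M) \<longlonglongrightarrow> 0"
proof -
  interpret prob_space M by (rule ps)
  obtain Nf where Nf: "\<And>e m k. e > 0 \<Longrightarrow> m \<ge> Nf e \<Longrightarrow> k \<ge> Nf e \<Longrightarrow> (\<integral>\<omega>. (Y m \<omega> - Y k \<omega>)^2 \<partial>M) < e"
    using cau by metis
  define r where "r j = (\<Sum>i\<le>j. Nf ((1/16)^i)) + j" for j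
  have rN: "Nf ((1/16)^j) \<le> r j" for j
  proof -
    have "Nf ((1/16)^j) \<le> (\<Sum>i\<le>j. Nf ((1/16::real)^i))"
      by (rule member_le_sum) auto
    then show ?thesis unfolding r_def by simp
  qed
  have r_mono: "r j \<le> r (Suc j)" for j unfolding r_def by simp
  have r_ge: "j \<le> r j" for j unfolding r_def by simp
  define Z where "Z j = Y (r j)" for j
  define d where "d j \<omega> = Z (Suc j) \<omega> - Z j \<omega>" for j \<omega>
  have Ym[measurable]: "Y m \<in> borel_measurable M" for m using Y unfolding sqi_def by auto
  have Zm[measurable]: "Z j \<in> borel_measurable M" for j unfolding Z_def by simp
  have dm[measurable]: "d j \<in> borel_measurable M" for j unfolding d_def by simp
  have dsqi: "sqi M (d j)" for j unfolding d_def Z_def by (intro sqi_diff Y)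
  have Ed: "(\<integral>\<omega>. (d j \<omega>)^2 \<partial>M) < (1/16)^j" for j
    unfolding d_def Z_def using Nf[of "(1/16)^j" "r (Suc j)" "r j"] rN[of j] r_mono[of j] by simp
  have nd: "(\<integral>\<^sup>+\<omega>. ennreal \<bar>d j \<omega>\<bar> \<partial>M) \<le> ennreal ((1/4)^j)" for j
  proof -
    have pw: "\<bar>d j \<omega>\<bar> \<le> (4^j * (d j \<omega>)^2 + (1/4)^j) / 2" for \<omega>
    proof -
      have "\<bar>(2^j * d j \<omega>) * (1/2)^j\<bar> \<le> ((2^j * d j \<omega>)^2 + ((1/2)^j)^2) / 2"
        by (rule abs_mult_le_half2)
      also have "(2^j * d j \<omega>)^2 = 4^j * (d j \<omega>)^2"
        by (simp add: power_mult_distrib power_even_eq[symmetric] mult.commute[of j 2]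
             flip: power_mult) (simp add: power_mult)
      also have "((1/2)^j)^2 = ((1/4)::real)^j"
        by (simp add: power_mult[symmetric] mult.commute[of j 2]) (simp add: power_mult power_divide)
      finally have h: "\<bar>(2^j * d j \<omega>) * (1/2)^j\<bar> \<le> (4^j * (d j \<omega>)^2 + (1/4)^j) / 2" .
      have "(2^j * d j \<omega>) * (1/2)^j = d j \<omega>" by (simp add: power_one_over field_simps)
      with h show ?thesis by simp
    qed
    have ii: "integrable M (\<lambda>\<omega>. (4^j * (d j \<omega>)^2 + (1/4)^j) / 2)"
      using dsqi[of j] unfolding sqi_def by auto
    have "(\<integral>\<^sup>+\<omega>. ennreal \<bar>d j \<omega>\<bar> \<partial>M) \<le> (\<integral>\<^sup>+\<omega>. ennreal ((4^j * (d j \<omega>)^2 + (1/4)^j) / 2) \<partial>M)"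
      by (intro nn_integral_mono ennreal_leI pw)
    also have "\<dots> = ennreal (\<integral>\<omega>. (4^j * (d j \<omega>)^2 + (1/4)^j) / 2 \<partial>M)"
      using ii by (intro nn_integral_eq_integral) auto
    also have "(\<integral>\<omega>. (4^j * (d j \<omega>)^2 + (1/4)^j) / 2 \<partial>M) = (4^j * (\<integral>\<omega>. (d j \<omega>)^2 \<partial>M) + (1/4)^j) / 2"
      using dsqi[of j] unfolding sqi_def by (simp add: prob_space)
    also have "\<dots> \<le> (4^j * (1/16)^j + (1/4)^j) / 2"
      using Ed[of j] by (intro divide_right_mono add_right_mono mult_left_mono) auto
    also have "(4^j * (1/16)^j + (1/4)^j) / 2 = ((1/4)::real)^j"
      by (simp add: power_mult_distrib[symmetric] flip: power_divide)
    finally show ?thesis by (simp add: ennreal_leI)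
  qed
  have "(\<integral>\<^sup>+\<omega>. (\<Sum>j. ennreal \<bar>d j \<omega>\<bar>) \<partial>M) = (\<Sum>j. \<integral>\<^sup>+\<omega>. ennreal \<bar>d j \<omega>\<bar> \<partial>M)"
    by (rule nn_integral_suminf) measurable
  also have "\<dots> \<le> (\<Sum>j. ennreal ((1/4)^j))"
    by (intro suminf_le nd) auto
  also have "\<dots> = ennreal (\<Sum>j. (1/4)^j)"
    by (intro suminf_ennreal2) (auto simp: summable_geometric)
  finally have "(\<integral>\<^sup>+\<omega>. (\<Sum>j. ennreal \<bar>d j \<omega>\<bar>) \<partial>M) \<noteq> \<infinity>"
    by (auto simp: top_unique)
  then have "AE \<omega> in M. (\<Sum>j. ennreal \<bar>d j \<omega>\<bar>) \<noteq> \<infinity>"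
    by (intro nn_integral_PInf_AE) measurable
  then have conv: "AE \<omega> in M. convergent (\<lambda>j. Z j \<omega>)"
  proof (rule AE_mp, intro AE_I2 impI)
    fix \<omega> assume "(\<Sum>j. ennreal \<bar>d j \<omega>\<bar>) \<noteq> \<infinity>"
    then have "summable (\<lambda>j. \<bar>d j \<omega>\<bar>)"
      by (intro summable_suminf_not_top) auto
    then have "summable (\<lambda>j. d j \<omega>)" by (rule summable_rabs_cancel)
    then have "convergent (\<lambda>n. \<Sum>j<n. d j \<omega>)"
      using summable_iff_convergent by blast
    then have "convergent (\<lambda>n. Z 0 \<omega> + (\<Sum>j<n. d j \<omega>))"
      by (intro convergent_add convergent_const)
    moreover have "(\<lambda>n. Z 0 \<omega> + (\<Sum>j<n. d j \<omega>)) = (\<lambda>n. Z n \<omega>)"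
      unfolding d_def by (simp add: sum_lessThan_telescope[where f="\<lambda>j. Z j \<omega>"])
    ultimately show "convergent (\<lambda>j. Z j \<omega>)" by simp
  qed
  define X where "X \<omega> = lim (\<lambda>j. Z j \<omega>)" for \<omega>
  have Xm[measurable]: "X \<in> borel_measurable M" unfolding X_def by measurable
  have ZX: "AE \<omega> in M. (\<lambda>j. Z j \<omega>) \<longlonglongrightarrow> X \<omega>"
    using conv by eventually_elim (simp add: X_def convergent_LIMSEQ_iff)
  have fatou: "(\<integral>\<^sup>+\<omega>. ennreal ((Y m \<omega> - X \<omega>)^2) \<partial>M) \<le> ennreal e"
    if e: "e > 0" and m: "m \<ge> Nf e" for e m
  proof -
    have "(\<integral>\<^sup>+\<omega>. ennreal ((Y m \<omega> - X \<omega>)^2) \<partial>M) = (\<integral>\<^sup>+\<omega>. liminf (\<lambda>j. ennreal ((Y m \<omega> - Z j \<omega>)^2)) \<partial>M)"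
    proof (intro nn_integral_cong_AE)
      show "AE \<omega> in M. ennreal ((Y m \<omega> - X \<omega>)^2) = liminf (\<lambda>j. ennreal ((Y m \<omega> - Z j \<omega>)^2))"
        using ZX
      proof eventually_elim
        case (elim \<omega>)
        have "(\<lambda>j. ennreal ((Y m \<omega> - Z j \<omega>)^2)) \<longlonglongrightarrow> ennreal ((Y m \<omega> - X \<omega>)^2)"
          by (intro tendsto_ennrealI tendsto_intros elim)
        then show ?case by (rule lim_imp_Liminf[symmetric, rotated]) simp
      qed
    qed
    also have "\<dots> \<le> liminf (\<lambda>j. \<integral>\<^sup>+\<omega>. ennreal ((Y m \<omega> - Z j \<omega>)^2) \<partial>M)"
      by (rule nn_integral_liminf) measurable
    also have "\<dots> \<le> ennreal e"
    proof (rule Liminf_le)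
      show "\<forall>\<^sub>F j in sequentially. (\<integral>\<^sup>+\<omega>. ennreal ((Y m \<omega> - Z j \<omega>)^2) \<partial>M) \<le> ennreal e"
        unfolding eventually_sequentially
      proof (intro exI allI impI)
        fix j assume j: "j \<ge> Nf e"
        have s: "sqi M (\<lambda>\<omega>. Y m \<omega> - Z j \<omega>)" unfolding Z_def by (intro sqi_diff Y)
        have "(\<integral>\<^sup>+\<omega>. ennreal ((Y m \<omega> - Z j \<omega>)^2) \<partial>M) = ennreal (\<integral>\<omega>. (Y m \<omega> - Z j \<omega>)^2 \<partial>M)"
          using s unfolding sqi_def by (intro nn_integral_eq_integral) auto
        also have "\<dots> \<le> ennreal e"
          using Nf[OF e m, of "r j"] r_ge[of j] j unfolding Z_def by (intro ennreal_leI) simp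
        finally show "(\<integral>\<^sup>+\<omega>. ennreal ((Y m \<omega> - Z j \<omega>)^2) \<partial>M) \<le> ennreal e" .
      qed
    qed simp
    finally show ?thesis .
  qed
  define m0 where "m0 = Nf 1"
  have i0: "integrable M (\<lambda>\<omega>. (Y m0 \<omega> - X \<omega>)^2)"
  proof (rule integrableI_bounded)
    show "(\<lambda>\<omega>. (Y m0 \<omega> - X \<omega>)^2) \<in> borel_measurable M" by measurable
    have le1: "(\<integral>\<^sup>+\<omega>. ennreal (norm ((Y m0 \<omega> - X \<omega>)^2)) \<partial>M) \<le> ennreal 1"
      using fatou[of 1 m0] unfolding m0_def by simp
    show "(\<integral>\<^sup>+\<omega>. ennreal (norm ((Y m0 \<omega> - X \<omega>)^2)) \<partial>M) < \<infinity>"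
      using le1 ennreal_less_top[of 1] unfolding infinity_ennreal_def by (rule le_less_trans)
  qed
  have Xs: "sqi M X"
  proof -
    have "sqi M (\<lambda>\<omega>. Y m0 \<omega> - (Y m0 \<omega> - X \<omega>))"
      using sqi_diff[OF Y[of m0], of "\<lambda>\<omega>. Y m0 \<omega> - X \<omega>"] i0 Y[of m0] unfolding sqi_def by auto
    then show ?thesis by simp
  qed
  have "(\<lambda>m. \<integral>\<omega>. (Y m \<omega> - X \<omega>)^2 \<partial>M) \<longlonglongrightarrow> 0"
  proof (rule LIMSEQ_I)
    fix e :: real assume e: "e > 0"
    show "\<exists>no. \<forall>m\<ge>no. norm ((\<integral>\<omega>. (Y m \<omega> - X \<omega>)^2 \<partial>M) - 0) < e"
    proof (intro exI allI impI)
      fix m assume m: "m \<ge> Nf (e/2)"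
      have s: "sqi M (\<lambda>\<omega>. Y m \<omega> - X \<omega>)" by (intro sqi_diff Y Xs)
      have "ennreal (\<integral>\<omega>. (Y m \<omega> - X \<omega>)^2 \<partial>M) = (\<integral>\<^sup>+\<omega>. ennreal ((Y m \<omega> - X \<omega>)^2) \<partial>M)"
        using s unfolding sqi_def by (intro nn_integral_eq_integral[symmetric]) auto
      also have "\<dots> \<le> ennreal (e/2)" using fatou[of "e/2" m] e m by simp
      finally have "(\<integral>\<omega>. (Y m \<omega> - X \<omega>)^2 \<partial>M) \<le> e/2"
        using e by (subst (asm) ennreal_le_iff) auto
      moreover have "(\<integral>\<omega>. (Y m \<omega> - X \<omega>)^2 \<partial>M) \<ge> 0" by simp
      ultimately show "norm ((\<integral>\<omega>. (Y m \<omega> - X \<omega>)^2 \<partial>M) - 0) < e" using e by simp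
    qed
  qed
  with Xs show ?thesis by blast
qed


definition clip :: "real \<Rightarrow> real \<Rightarrow> real" where "clip M x = max (- M) (min M x)"

lemma clip_bound: "M \<ge> 0 \<Longrightarrow> \<bar>clip M x\<bar> \<le> M" unfolding clip_def by auto
lemma clip_id: "\<bar>x\<bar> \<le> M \<Longrightarrow> clip M x = x" unfolding clip_def by auto
lemma clip_0: "M \<ge> 0 \<Longrightarrow> clip M 0 = 0" unfolding clip_def by auto
lemma clip_diff: "M \<ge> 0 \<Longrightarrow> \<bar>x - clip M x\<bar> \<le> \<bar>x\<bar>" unfolding clip_def by auto
lemma clip_cont[continuous_intros]: "continuous_on S g \<Longrightarrow> continuous_on S (\<lambda>t. clip M (g t))"
  unfolding clip_def by (intro continuous_intros)
lemma clip_tendsto: "(f \<longlongrightarrow> l) F \<Longrightarrow> ((\<lambda>x. clip M (f x)) \<longlongrightarrow> clip M l) F"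
  unfolding clip_def by (intro tendsto_intros)
lemma clip_meas[measurable]: "f \<in> borel_measurable N \<Longrightarrow> (\<lambda>x. clip M (f x)) \<in> borel_measurable N"
  unfolding clip_def by (intro borel_measurable_max borel_measurable_min borel_measurable_const)

lemma which_int:
  fixes T :: real and n :: nat
  assumes T: "T > 0" and n: "n > 0" and t: "0 < t" "t \<le> T"
  shows "\<exists>k<n. k * T / n < t \<and> t \<le> (Suc k) * T / n"
proof -
  define c where "c = \<lceil>t * n / T\<rceil>"
  have pos: "t * n / T > 0" using T n t by simp
  have c1: "c \<ge> 1" unfolding c_def using pos by (simp add: le_ceiling_iff)
  have cn: "c \<le> n" unfolding c_def using T t by (simp add: ceiling_le_iff field_simps mult_right_mono)
  have cc: "real_of_int c - 1 < t * n / T" "t * n / T \<le> real_of_int c"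
    unfolding c_def using ceiling_correct by auto
  define k where "k = nat c - 1"
  have kc: "real k = real_of_int c - 1" using c1 unfolding k_def by (simp add: of_nat_diff)
  have "k < n" using c1 cn unfolding k_def by linarith
  moreover have "k * T / n < t"
  proof -
    have "real k < t * n / T" using kc cc by simp
    then show ?thesis using T n by (simp add: field_simps)
  qed
  moreover have "t \<le> (Suc k) * T / n"
  proof -
    have "t * n / T \<le> real (Suc k)" using kc cc by simp
    then show ?thesis using T n by (simp add: field_simps)
  qed
  ultimately show ?thesis by blast
qed

lemma int_unique:
  fixes T :: real and n :: nat
  assumes T: "T > 0" and n: "n > 0"
    and j: "j * T / n < t \<and> t \<le> (Suc j) * T / n" and k: "k * T / n < t \<and> t \<le> (Suc k) * T / n"
  shows "j = k"
proof (rule ccontr)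
  assume "j \<noteq> k"
  then consider "Suc j \<le> k" | "Suc k \<le> j" by linarith
  then show False
  proof cases
    case 1
    then have "(Suc j) * T / n \<le> k * T / n" using T n by (intro divide_right_mono mult_right_mono) auto
    then show False using j k by linarith
  next
    case 2
    then have "(Suc k) * T / n \<le> j * T / n" using T n by (intro divide_right_mono mult_right_mono) auto
    then show False using j k by linarith
  qed
qed

context kern
begin

lemma step_L2k: assumes "partition_of T n p" shows "L2_on T (step_fun n p a)"
proof -
  define A where "A = (\<Sum>k<n. \<bar>a k\<bar>)"
  have sm[measurable]: "step_fun n p a \<in> borel_measurable borel"
    unfolding step_fun_def by measurable
  have bd: "\<bar>step_fun n p a t\<bar> \<le> A" for t
  proof -
    have "\<bar>step_fun n p a t\<bar> \<le> (\<Sum>k<n. \<bar>a k * indicator {p k<..p (Suc k)} t\<bar>)"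
      unfolding step_fun_def by (rule sum_abs)
    also have "\<dots> \<le> A" unfolding A_def by (intro sum_mono) (auto simp: indicator_def abs_mult)
    finally show ?thesis .
  qed
  have "integrable lborel (\<lambda>t. ind t * (step_fun n p a t)^2)"
  proof (rule Bochner_Integration.integrable_bound)
    show "integrable lborel (\<lambda>t. A^2 * ind t)" using ind_int by simp
    show "(\<lambda>t. ind t * (step_fun n p a t)^2) \<in> borel_measurable lborel" by measurable
    show "AE t in lborel. norm (ind t * (step_fun n p a t)^2) \<le> norm (A^2 * ind t)"
    proof (intro AE_I2)
      fix t
      have "(step_fun n p a t)^2 \<le> A^2"
        using bd[of t] by (metis abs_le_square_iff abs_ge_zero order_trans abs_of_nonneg power2_abs)
      then show "norm (ind t * (step_fun n p a t)^2) \<le> norm (A^2 * ind t)"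
        by (auto simp: indicator_def)
    qed
  qed
  then show ?thesis
    unfolding L2_on_def set_borel_measurable_def set_integrable_def by simp
qed

lemma bounded_L2:
  assumes m: "(\<lambda>t. ind t * h t) \<in> borel_measurable borel" and b: "\<And>t. \<bar>h t\<bar> \<le> M"
  shows "L2_on T h"
proof -
  have "integrable lborel (\<lambda>t. ind t * (h t)^2)"
  proof (rule Bochner_Integration.integrable_bound)
    show "integrable lborel (\<lambda>t. M^2 * ind t)" using ind_int by simp
    have "(\<lambda>t. (ind t * h t)^2) \<in> borel_measurable lborel" using m by measurable
    then show "(\<lambda>t. ind t * (h t)^2) \<in> borel_measurable lborel" by (simp add: ind_sq)
    show "AE t in lborel. norm (ind t * (h t)^2) \<le> norm (M^2 * ind t)"
    proof (intro AE_I2)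
      fix t
      have "(h t)^2 \<le> M^2"
        using b[of t] by (metis abs_le_square_iff abs_ge_zero order_trans abs_of_nonneg power2_abs)
      then show "norm (ind t * (h t)^2) \<le> norm (M^2 * ind t)"
        by (auto simp: indicator_def)
    qed
  qed
  with m show ?thesis
    unfolding L2_on_def set_borel_measurable_def set_integrable_def by simp
qed

end

context kern
begin

lemma trunc_approx:
  assumes f: "L2_on T f" and e: "e > 0"
  shows "\<exists>M>0. nrm (\<lambda>t. f t - clip M (f t)) < e"
proof -
  have fm[measurable]: "(\<lambda>t. ind t * f t) \<in> borel_measurable borel" using L2_meas[OF f] .
  define s where "s i t = (ind t * f t - clip (real (Suc i)) (ind t * f t))^2" for i t
  have s_eq: "s i t = ind t * (f t - clip (real (Suc i)) (f t))^2" for i t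
    unfolding s_def by (cases "t \<in> {0..T}") (auto simp: clip_0)
  have m0: "(\<lambda>t. 0::real) \<in> borel_measurable lborel" by simp
  have ms: "s i \<in> borel_measurable lborel" for i unfolding s_def by measurable
  have wi: "integrable lborel (\<lambda>t. ind t * (f t)^2)" using L2_int[OF f] .
  have ae: "AE t in lborel. (\<lambda>i. s i t) \<longlonglongrightarrow> 0"
  proof (intro AE_I2)
    fix t
    obtain N :: nat where N: "\<bar>ind t * f t\<bar> \<le> real N" using real_arch_simple by blast
    have "\<forall>i\<ge>N. s i t = 0"
      unfolding s_def using N by (auto simp: clip_id)
    then show "(\<lambda>i. s i t) \<longlonglongrightarrow> 0"
      by (intro tendsto_eventually) (auto simp: eventually_sequentially)
  qed
  have bd: "AE t in lborel. norm (s i t) \<le> ind t * (f t)^2" for i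
  proof (intro AE_I2)
    fix t
    have "\<bar>ind t * f t - clip (real (Suc i)) (ind t * f t)\<bar> \<le> \<bar>ind t * f t\<bar>"
      by (rule clip_diff) simp
    then have "(ind t * f t - clip (real (Suc i)) (ind t * f t))^2 \<le> (ind t * f t)^2"
      by (metis abs_ge_zero abs_le_square_iff order_trans)
    then show "norm (s i t) \<le> ind t * (f t)^2" unfolding s_def by (simp add: ind_sq)
  qed
  have "(\<lambda>i. integral\<^sup>L lborel (s i)) \<longlonglongrightarrow> integral\<^sup>L lborel (\<lambda>t. 0::real)"
    using Bochner_Integration.integral_dominated_convergence[OF m0 ms wi ae bd] by simp
  then have "(\<lambda>i. nrm (\<lambda>t. f t - clip (real (Suc i)) (f t))) \<longlonglongrightarrow> 0"
    unfolding nrm_eq s_eq by simp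
  from LIMSEQ_D[OF this e] obtain i where "norm (nrm (\<lambda>t. f t - clip (real (Suc i)) (f t)) - 0) < e"
    by blast
  then show ?thesis using nrm_nonneg by (intro exI[of _ "real (Suc i)"]) auto
qed

lemma clip_L2:
  assumes f: "L2_on T f" and M: "M > 0"
  shows "L2_on T (\<lambda>t. clip M (f t))"
proof (rule bounded_L2)
  have fm[measurable]: "(\<lambda>t. ind t * f t) \<in> borel_measurable borel" using L2_meas[OF f] .
  have "(\<lambda>t. clip M (ind t * f t)) \<in> borel_measurable borel" by measurable
  moreover have "(\<lambda>t. clip M (ind t * f t)) = (\<lambda>t. ind t * clip M (f t))"
    using M by (auto simp: fun_eq_iff indicator_def clip_0)
  ultimately show "(\<lambda>t. ind t * clip M (f t)) \<in> borel_measurable borel" by simp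
  show "\<bar>clip M (f t)\<bar> \<le> M" for t using M by (simp add: clip_bound)
qed

lemma cont_L2:
  assumes c: "continuous_on UNIV g" and b: "\<And>t. \<bar>g t\<bar> \<le> M"
  shows "L2_on T g"
proof (rule bounded_L2[OF _ b])
  have [measurable]: "g \<in> borel_measurable borel" using c by (rule borel_measurable_continuous_onI)
  show "(\<lambda>t. ind t * g t) \<in> borel_measurable borel" by measurable
qed

end

lemma arith_aux:
  fixes X A B C e :: real
  shows "X \<le> 2 * (2 * A + 2 * B) + 2 * C \<Longrightarrow> C < e / 6 \<Longrightarrow> A < e / 24 \<Longrightarrow> B < e / 24 \<Longrightarrow> 0 < e \<Longrightarrow> X < e"
proof -
  assume a: "X \<le> 2 * (2 * A + 2 * B) + 2 * C" "C < e / 6" "A < e / 24" "B < e / 24" "0 < e"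
  have "X \<le> 4 * A + 4 * B + 2 * C" using a(1) by (simp add: algebra_simps)
  then show "X < e" using a(2-5) by (simp add: field_simps)
qed

context kern
begin

lemma cont_approx:
  assumes h: "L2_on T h" and M: "M > 0" and b: "\<And>t. \<bar>h t\<bar> \<le> M" and e: "e > 0"
  shows "\<exists>g. continuous_on UNIV g \<and> (\<forall>t. \<bar>g t\<bar> \<le> M) \<and> nrm (\<lambda>t. h t - g t) < e"
proof -
  have hm[measurable]: "(\<lambda>t. ind t * h t) \<in> borel_measurable borel" using L2_meas[OF h] .
  have hm': "(\<lambda>t. ind t * h t) \<in> lborel \<rightarrow>\<^sub>M borel" using hm by simp
  have hl: "(\<lambda>t. ind t * h t) \<in> borel_measurable lebesgue" using measurable_completion[OF hm'] .
  have "(\<lambda>t. ind t * h t) measurable_on UNIV"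
    by (rule lebesgue_measurable_imp_measurable_on[OF hl]) simp
  then obtain N0 gs where N0: "negligible N0" and gc: "\<And>n. continuous_on UNIV (gs n)"
    and lim: "\<And>t. t \<notin> N0 \<Longrightarrow> (\<lambda>n. gs n t) \<longlonglongrightarrow> (if t \<in> UNIV then ind t * h t else 0)"
    unfolding measurable_on_def by blast
  define gc' where "gc' n t = clip M (gs n t)" for n t
  have gcc: "continuous_on UNIV (gc' n)" for n unfolding gc'_def by (intro continuous_intros gc)
  have gcm[measurable]: "gc' n \<in> borel_measurable borel" for n using gcc by (rule borel_measurable_continuous_onI)
  have gcb: "\<bar>gc' n t\<bar> \<le> M" for n t unfolding gc'_def using M by (simp add: clip_bound)
  have aeN: "AE t in lborel. t \<notin> N0"
  proof -
    have "N0 \<in> null_sets lebesgue" using N0 by (simp add: negligible_iff_null_sets)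
    then have "AE t in lebesgue. t \<notin> N0" by (rule AE_not_in)
    then show ?thesis by (simp add: AE_completion_iff)
  qed
  define s where "s n t = (ind t * h t - ind t * gc' n t)^2" for n t
  have s_eq: "s n t = ind t * (h t - gc' n t)^2" for n t
    unfolding s_def by (cases "t \<in> {0..T}") auto
  have m0: "(\<lambda>t. 0::real) \<in> borel_measurable lborel" by simp
  have ms: "s n \<in> borel_measurable lborel" for n unfolding s_def by measurable
  have wi: "integrable lborel (\<lambda>t. (2*M)^2 * ind t)" using ind_int by simp
  have ae: "AE t in lborel. (\<lambda>n. s n t) \<longlonglongrightarrow> 0"
    using aeN
  proof eventually_elim
    case (elim t)
    have "(\<lambda>n. gc' n t) \<longlonglongrightarrow> clip M (ind t * h t)"
      unfolding gc'_def using lim[OF elim] by (intro clip_tendsto) simp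
    moreover have "clip M (ind t * h t) = ind t * h t"
      using b[of t] by (intro clip_id) (auto simp: indicator_def)
    ultimately have "(\<lambda>n. gc' n t) \<longlonglongrightarrow> ind t * h t" by simp
    then have "(\<lambda>n. s n t) \<longlonglongrightarrow> (ind t * h t - ind t * (ind t * h t))^2"
      unfolding s_def by (intro tendsto_intros)
    then show ?case by (cases "0 \<le> t \<and> t \<le> T") (auto simp: indicator_def)
  qed
  have bd: "AE t in lborel. norm (s n t) \<le> (2*M)^2 * ind t" for n
  proof (intro AE_I2)
    fix t
    have "\<bar>h t - gc' n t\<bar> \<le> 2 * M" using b[of t] gcb[of n t] by linarith
    then have "(h t - gc' n t)^2 \<le> (2*M)^2"
      by (metis abs_ge_zero abs_le_square_iff order_trans abs_of_nonneg power2_abs)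
    then show "norm (s n t) \<le> (2*M)^2 * ind t" unfolding s_eq by (auto simp: indicator_def)
  qed
  have "(\<lambda>n. integral\<^sup>L lborel (s n)) \<longlonglongrightarrow> integral\<^sup>L lborel (\<lambda>t. 0::real)"
    using Bochner_Integration.integral_dominated_convergence[OF m0 ms wi ae bd] by simp
  then have "(\<lambda>n. nrm (\<lambda>t. h t - gc' n t)) \<longlonglongrightarrow> 0"
    unfolding nrm_eq s_eq by simp
  from LIMSEQ_D[OF this e] obtain n where "norm (nrm (\<lambda>t. h t - gc' n t) - 0) < e" by blast
  then show ?thesis using gcc gcb by (intro exI[of _ "gc' n"]) auto
qed

lemma step_approx:
  assumes g: "continuous_on UNIV g" and b: "\<And>t. \<bar>g t\<bar> \<le> M" and e: "e > 0"
  shows "\<exists>n p a. partition_of T n p \<and> nrm (\<lambda>t. step_fun n p a t - g t) < e"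
proof -
  have "uniformly_continuous_on {0..T} g"
    by (rule compact_uniformly_continuous) (use g in \<open>auto intro: continuous_on_subset\<close>)
  define \<epsilon> where "\<epsilon> = sqrt (e / (2 * T))"
  have eps: "\<epsilon> > 0" using e Tpos unfolding \<epsilon>_def by simp
  obtain \<delta> where d: "\<delta> > 0" and dd: "\<And>x x'. x \<in> {0..T} \<Longrightarrow> x' \<in> {0..T} \<Longrightarrow> dist x' x < \<delta> \<Longrightarrow> dist (g x') (g x) < \<epsilon>"
    using \<open>uniformly_continuous_on {0..T} g\<close> eps unfolding uniformly_continuous_on_def by metis
  define n where "n = nat \<lceil>T / \<delta>\<rceil> + 1"
  have n0: "n > 0" unfolding n_def by simp
  have nd: "T / n < \<delta>"
  proof -
    have "T / \<delta> < n" unfolding n_def by linarith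
    then have "T < n * \<delta>" using d by (simp add: field_simps)
    then show ?thesis using n0 by (simp add: field_simps)
  qed
  define p where "p k = real k * T / real n" for k
  define a where "a k = g (p (Suc k))" for k
  have part: "partition_of T n p"
    unfolding partition_of_def p_def using n0 Tpos by (auto simp: field_simps)
  have pw: "ind t * (step_fun n p a t - g t)^2 \<le> \<epsilon>^2 * ind t" if t0: "t \<noteq> 0" for t
  proof (cases "t \<in> {0..T}")
    case True
    then have tpos: "0 < t" "t \<le> T" using t0 by auto
    obtain k where k: "k < n" "k * T / n < t \<and> t \<le> (Suc k) * T / n"
      using which_int[OF Tpos n0 tpos] by blast
    have ind_k: "indicator {p j<..p (Suc j)} t = (if j = k then 1 else (0::real))" if "j < n" for j
    proof (cases "j = k")
      case True then show ?thesis using k unfolding p_def by (simp add: indicator_def)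
    next
      case False
      have "\<not> (j * T / n < t \<and> t \<le> (Suc j) * T / n)"
        using int_unique[OF Tpos n0 _ k(2), of j] False by blast
      then show ?thesis using False unfolding p_def by (simp add: indicator_def)
    qed
    have "step_fun n p a t = (\<Sum>j<n. if j = k then a j else 0)"
      unfolding step_fun_def by (intro sum.cong refl) (simp add: ind_k)
    also have "\<dots> = a k" using k by simp
    finally have st: "step_fun n p a t = a k" .
    have "p (Suc k) \<in> {0..T}"
    proof -
      have "real (Suc k) * T \<le> real n * T" using k Tpos by (intro mult_right_mono) auto
      then show ?thesis using n0 Tpos unfolding p_def by (auto simp: field_simps)
    qed
    moreover have "dist (p (Suc k)) t < \<delta>"
    proof -
      have "p (Suc k) - t < p (Suc k) - p k" using k unfolding p_def by simp
      also have "\<dots> = T / n" unfolding p_def using n0 by (simp add: field_simps)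
      finally show ?thesis using k nd unfolding p_def dist_real_def by simp
    qed
    ultimately have "dist (g (p (Suc k))) (g t) < \<epsilon>" using dd True by blast
    then have "\<bar>step_fun n p a t - g t\<bar> \<le> \<epsilon>" unfolding st a_def dist_real_def by simp
    then have "(step_fun n p a t - g t)^2 \<le> \<epsilon>^2"
      by (metis abs_ge_zero abs_le_square_iff order_trans abs_of_nonneg power2_abs)
    then show ?thesis using True by simp
  qed simp
  have i1: "integrable lborel (\<lambda>t. ind t * (step_fun n p a t - g t)^2)"
    by (intro L2_int L2_diff step_L2k[OF part] cont_L2[OF g b])
  have i2: "integrable lborel (\<lambda>t. \<epsilon>^2 * ind t)" using ind_int by simp
  have "nrm (\<lambda>t. step_fun n p a t - g t) \<le> (\<integral>t. \<epsilon>^2 * ind t \<partial>lborel)"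
    unfolding nrm_eq
    by (rule integral_mono_AE[OF i1 i2]) (use AE_lborel_singleton[of 0] pw in \<open>auto elim!: AE_mp\<close>)
  also have "\<dots> = \<epsilon>^2 * T" using Tpos by simp
  also have "\<dots> = e / 2" unfolding \<epsilon>_def using e Tpos by simp
  also have "\<dots> < e" using e by simp
  finally show ?thesis using part by blast
qed

lemma density_e:
  assumes f: "L2_on T f" and e: "e > 0"
  shows "\<exists>n p a. partition_of T n p \<and> nrm (\<lambda>t. step_fun n p a t - f t) < e"
proof -
  obtain M where M: "M > 0" and fM: "nrm (\<lambda>t. f t - clip M (f t)) < e / 6"
    using trunc_approx[OF f, of "e/6"] e by auto
  define h where "h t = clip M (f t)" for t
  have hL2: "L2_on T h" unfolding h_def by (rule clip_L2[OF f M])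
  have hb: "\<bar>h t\<bar> \<le> M" for t unfolding h_def using M by (simp add: clip_bound)
  obtain g where gc: "continuous_on UNIV g" and gb: "\<And>t. \<bar>g t\<bar> \<le> M" and hg: "nrm (\<lambda>t. h t - g t) < e / 24"
    using cont_approx[OF hL2 M hb, of "e/24"] e by auto
  obtain n p a where part: "partition_of T n p" and sg: "nrm (\<lambda>t. step_fun n p a t - g t) < e / 24"
    using step_approx[OF gc gb, of "e/24"] e by auto
  have gL2: "L2_on T g" by (rule cont_L2[OF gc gb])
  have sL2: "L2_on T (step_fun n p a)" by (rule step_L2k[OF part])
  have "nrm (\<lambda>t. step_fun n p a t - f t) \<le> 2 * nrm (\<lambda>t. step_fun n p a t - h t) + 2 * nrm (\<lambda>t. f t - h t)"
    by (rule nrm_tri[OF sL2 f hL2])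
  also have "nrm (\<lambda>t. step_fun n p a t - h t) \<le> 2 * nrm (\<lambda>t. step_fun n p a t - g t) + 2 * nrm (\<lambda>t. h t - g t)"
    by (rule nrm_tri[OF sL2 hL2 gL2])
  finally have "nrm (\<lambda>t. step_fun n p a t - f t) \<le> 2 * (2 * nrm (\<lambda>t. step_fun n p a t - g t) + 2 * nrm (\<lambda>t. h t - g t)) + 2 * nrm (\<lambda>t. f t - h t)"
    by simp
  moreover have "nrm (\<lambda>t. f t - h t) < e / 6" using fM unfolding h_def .
  ultimately have "nrm (\<lambda>t. step_fun n p a t - f t) < e" using sg hg e by (rule arith_aux)
  with part show ?thesis by blast
qed

lemma density:
  assumes f: "L2_on T f"
  shows "\<exists>n p a. (\<forall>m. partition_of T (n m) (p m)) \<and>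
     (\<lambda>m. LBINT t:{0..T}. (step_fun (n m) (p m) (a m) t - f t)^2) \<longlonglongrightarrow> 0"
proof -
  have "\<forall>m. \<exists>n p a. partition_of T n p \<and> nrm (\<lambda>t. step_fun n p a t - f t) < 1 / real (Suc m)"
    using density_e[OF f] by simp
  then obtain n p a where H: "\<And>m. partition_of T (n m) (p m) \<and> nrm (\<lambda>t. step_fun (n m) (p m) (a m) t - f t) < 1 / real (Suc m)"
    by metis
  have "(\<lambda>m. nrm (\<lambda>t. step_fun (n m) (p m) (a m) t - f t)) \<longlonglongrightarrow> 0"
  proof (rule tendsto_sandwich[OF _ _ tendsto_const])
    show "(\<lambda>m. 1 / real (Suc m)) \<longlonglongrightarrow> 0" using LIMSEQ_inverse_real_of_nat by (simp add: inverse_eq_divide)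
    show "\<forall>\<^sub>F m in sequentially. 0 \<le> nrm (\<lambda>t. step_fun (n m) (p m) (a m) t - f t)" by (simp add: nrm_nonneg)
    show "\<forall>\<^sub>F m in sequentially. nrm (\<lambda>t. step_fun (n m) (p m) (a m) t - f t) \<le> 1 / real (Suc m)"
      using H by (simp add: less_imp_le)
  qed
  then show ?thesis using H unfolding nrm_def by blast
qed

end

lemma conv_aux:
  fixes x :: "nat \<Rightarrow> real"
  assumes a: "a \<longlonglongrightarrow> 0" and b: "b \<longlonglongrightarrow> 0" and nn: "\<And>m. a m \<ge> 0" "\<And>m. b m \<ge> 0"
    and FG: "F \<ge> 0" "G \<ge> 0" "c \<ge> 0"
    and bd: "\<And>m. \<bar>x m - x0\<bar> \<le> c * (sqrt (a m) * sqrt (2 * b m + 2 * G) + sqrt (2 * a m + 2 * F) * sqrt (b m))"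
  shows "x \<longlonglongrightarrow> x0"
proof -
  have "(\<lambda>m. c * (sqrt (a m) * sqrt (2 * b m + 2 * G) + sqrt (2 * a m + 2 * F) * sqrt (b m)))
     \<longlonglongrightarrow> c * (sqrt 0 * sqrt (2 * 0 + 2 * G) + sqrt (2 * 0 + 2 * F) * sqrt 0)"
    by (intro tendsto_intros a b)
  then have "(\<lambda>m. c * (sqrt (a m) * sqrt (2 * b m + 2 * G) + sqrt (2 * a m + 2 * F) * sqrt (b m))) \<longlonglongrightarrow> 0"
    by simp
  then have "(\<lambda>m. x m - x0) \<longlonglongrightarrow> 0"
    by (rule Lim_null_comparison[rotated]) (use bd in auto)
  then show ?thesis by (simp add: Lim_null[symmetric])
qed

lemma E_cs:
  assumes ps: "prob_space M" and U: "sqi M U" and V: "sqi M V"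
  shows "\<bar>\<integral>\<omega>. U \<omega> * V \<omega> \<partial>M\<bar> \<le> sqrt (\<integral>\<omega>. (U \<omega>)^2 \<partial>M) * sqrt (\<integral>\<omega>. (V \<omega>)^2 \<partial>M)"
proof -
  let ?A = "(\<integral>\<omega>. (U \<omega>)^2 \<partial>M) / 2" and ?B = "(\<integral>\<omega>. (V \<omega>)^2 \<partial>M) / 2"
  have "\<bar>\<integral>\<omega>. U \<omega> * V \<omega> \<partial>M\<bar> \<le> 2 * sqrt (?A * ?B)"
  proof (rule gen_amgm)
    show "?A \<ge> 0" "?B \<ge> 0" by auto
    fix x :: real assume x: "x > 0"
    have pw: "\<bar>U \<omega> * V \<omega>\<bar> \<le> (x * (U \<omega>)^2 + (V \<omega>)^2 / x) / 2" for \<omega>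
    proof -
      have "\<bar>(sqrt x * U \<omega>) * (V \<omega> / sqrt x)\<bar> \<le> ((sqrt x * U \<omega>)^2 + (V \<omega> / sqrt x)^2) / 2"
        by (rule abs_mult_le_half2)
      moreover have "(sqrt x * U \<omega>) * (V \<omega> / sqrt x) = U \<omega> * V \<omega>" using x by simp
      moreover have "(sqrt x * U \<omega>)^2 = x * (U \<omega>)^2" "(V \<omega> / sqrt x)^2 = (V \<omega>)^2 / x"
        using x by (auto simp: power_mult_distrib power_divide)
      ultimately show ?thesis by simp
    qed
    have iUV: "integrable M (\<lambda>\<omega>. U \<omega> * V \<omega>)" by (rule sqi_mult_int[OF U V])
    have i2: "integrable M (\<lambda>\<omega>. (x * (U \<omega>)^2 + (V \<omega>)^2 / x) / 2)" using U V unfolding sqi_def by auto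
    have "\<bar>\<integral>\<omega>. U \<omega> * V \<omega> \<partial>M\<bar> \<le> (\<integral>\<omega>. \<bar>U \<omega> * V \<omega>\<bar> \<partial>M)"
      by (rule integral_abs_bound)
    also have "\<dots> \<le> (\<integral>\<omega>. (x * (U \<omega>)^2 + (V \<omega>)^2 / x) / 2 \<partial>M)"
      using iUV i2 pw by (intro integral_mono) auto
    also have "\<dots> = ?A * x + ?B / x"
      using U V unfolding sqi_def by (simp add: field_simps)
    finally show "\<bar>\<integral>\<omega>. U \<omega> * V \<omega> \<partial>M\<bar> \<le> ?A * x + ?B / x" .
  qed
  also have "\<dots> = sqrt (\<integral>\<omega>. (U \<omega>)^2 \<partial>M) * sqrt (\<integral>\<omega>. (V \<omega>)^2 \<partial>M)"
    by (simp add: real_sqrt_mult real_sqrt_divide)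
  finally show ?thesis .
qed

lemma Etri:
  assumes "sqi M X" "sqi M Y" "sqi M Z"
  shows "(\<integral>\<omega>. (X \<omega> - Z \<omega>)^2 \<partial>M) \<le> 2 * (\<integral>\<omega>. (X \<omega> - Y \<omega>)^2 \<partial>M) + 2 * (\<integral>\<omega>. (Y \<omega> - Z \<omega>)^2 \<partial>M)"
proof -
  have i: "integrable M (\<lambda>\<omega>. (X \<omega> - Z \<omega>)^2)" "integrable M (\<lambda>\<omega>. (X \<omega> - Y \<omega>)^2)" "integrable M (\<lambda>\<omega>. (Y \<omega> - Z \<omega>)^2)"
    using assms sqi_diff unfolding sqi_def by blast+
  have "(\<integral>\<omega>. (X \<omega> - Z \<omega>)^2 \<partial>M) \<le> (\<integral>\<omega>. 2 * (X \<omega> - Y \<omega>)^2 + 2 * (Y \<omega> - Z \<omega>)^2 \<partial>M)"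
  proof (rule integral_mono)
    fix \<omega>
    have "2 * (X \<omega> - Y \<omega>)^2 + 2 * (Y \<omega> - Z \<omega>)^2 - (X \<omega> - Z \<omega>)^2 = (X \<omega> - 2 * Y \<omega> + Z \<omega>)^2"
      by (simp add: power2_eq_square algebra_simps)
    then show "(X \<omega> - Z \<omega>)^2 \<le> 2 * (X \<omega> - Y \<omega>)^2 + 2 * (Y \<omega> - Z \<omega>)^2"
      by (smt (verit) zero_le_power2)
  qed (use i in auto)
  also have "\<dots> = 2 * (\<integral>\<omega>. (X \<omega> - Y \<omega>)^2 \<partial>M) + 2 * (\<integral>\<omega>. (Y \<omega> - Z \<omega>)^2 \<partial>M)"
    using i by simp
  finally show ?thesis .
qed

context proc
begin

lemma step_L2: assumes "partition_of T n p" shows "L2_on T (step_fun n p a)"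
proof -
  define A where "A = (\<Sum>k<n. \<bar>a k\<bar>)"
  have sm[measurable]: "step_fun n p a \<in> borel_measurable borel"
    unfolding step_fun_def by measurable
  have bd: "\<bar>step_fun n p a t\<bar> \<le> A" for t
  proof -
    have "\<bar>step_fun n p a t\<bar> \<le> (\<Sum>k<n. \<bar>a k * indicator {p k<..p (Suc k)} t\<bar>)"
      unfolding step_fun_def by (rule sum_abs)
    also have "\<dots> \<le> A" unfolding A_def by (intro sum_mono) (auto simp: indicator_def abs_mult)
    finally show ?thesis .
  qed
  have "integrable lborel (\<lambda>t. ind t * (step_fun n p a t)^2)"
  proof (rule Bochner_Integration.integrable_bound)
    show "integrable lborel (\<lambda>t. A^2 * ind t)" using ind_int by simp
    show "(\<lambda>t. ind t * (step_fun n p a t)^2) \<in> borel_measurable lborel" by measurable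
    show "AE t in lborel. norm (ind t * (step_fun n p a t)^2) \<le> norm (A^2 * ind t)"
    proof (intro AE_I2)
      fix t
      have "(step_fun n p a t)^2 \<le> A^2"
        using bd[of t] by (metis abs_le_square_iff abs_ge_zero order_trans abs_of_nonneg power2_abs)
      then show "norm (ind t * (step_fun n p a t)^2) \<le> norm (A^2 * ind t)"
        by (auto simp: indicator_def)
    qed
  qed
  then show ?thesis
    unfolding L2_on_def set_borel_measurable_def set_integrable_def by simp
qed

lemma RS_sqi: assumes "partition_of T n p" shows "sqi M (riemann_sum B n p a)"
proof -
  have "sqi M (\<lambda>\<omega>. \<Sum>k<n. a k * (B (p (Suc k)) \<omega> - B (p k) \<omega>))"
    using partition_range[OF assms]
    by (intro sqi_sum sqi_scale sqi_diff Bsqi) auto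
  then show ?thesis unfolding riemann_sum_def .
qed

lemma core:
  assumes p: "partition_of T n p" and q: "partition_of T n' q"
  shows "(\<integral>\<omega>. (riemann_sum B n p a \<omega> - riemann_sum B n' q b \<omega>)^2 \<partial>M)
     \<le> C * nrm (\<lambda>t. step_fun n p a t - step_fun n' q b t)"
proof -
  let ?X = "riemann_sum B n p a" and ?Y = "riemann_sum B n' q b"
  let ?s = "step_fun n p a" and ?r = "step_fun n' q b"
  have X: "sqi M ?X" and Y: "sqi M ?Y" using RS_sqi p q by auto
  have s: "L2_on T ?s" and r: "L2_on T ?r" using step_L2 p q by auto
  have iXY: "integrable M (\<lambda>\<omega>. ?X \<omega> * ?Y \<omega>)" "integrable M (\<lambda>\<omega>. ?Y \<omega> * ?X \<omega>)"
    "integrable M (\<lambda>\<omega>. ?X \<omega> * ?X \<omega>)" "integrable M (\<lambda>\<omega>. ?Y \<omega> * ?Y \<omega>)"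
    using sqi_mult_int X Y by blast+
  have "(\<integral>\<omega>. (?X \<omega> - ?Y \<omega>)^2 \<partial>M) = (\<integral>\<omega>. ?X \<omega> * ?X \<omega> - ?X \<omega> * ?Y \<omega> - (?Y \<omega> * ?X \<omega> - ?Y \<omega> * ?Y \<omega>) \<partial>M)"
    by (intro Bochner_Integration.integral_cong refl) (simp add: power2_eq_square algebra_simps)
  also have "\<dots> = (\<integral>\<omega>. ?X \<omega> * ?X \<omega> \<partial>M) - (\<integral>\<omega>. ?X \<omega> * ?Y \<omega> \<partial>M) - ((\<integral>\<omega>. ?Y \<omega> * ?X \<omega> \<partial>M) - (\<integral>\<omega>. ?Y \<omega> * ?Y \<omega> \<partial>M))"
    using iXY by (simp only: Bochner_Integration.integral_diff Bochner_Integration.integrable_diff)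
  also have "\<dots> = Q' ?s ?s - Q' ?s ?r - (Q' ?r ?s - Q' ?r ?r)"
    using EQ p q by simp
  also have "\<dots> = Q' (\<lambda>t. ?s t - ?r t) (\<lambda>t. ?s t - ?r t)"
    using s r by (simp add: Q'_diff1 Q'_diff2 L2_diff)
  also have "\<dots> \<le> \<bar>\<dots>\<bar>" by simp
  also have "\<dots> \<le> C * sqrt (nrm (\<lambda>t. ?s t - ?r t)) * sqrt (nrm (\<lambda>t. ?s t - ?r t))"
    by (intro Q_prod_bound L2_diff s r)
  also have "\<dots> = C * nrm (\<lambda>t. ?s t - ?r t)"
    using nrm_nonneg by simp
  finally show ?thesis .
qed

end

context proc
begin

lemma nrm_lim: "(\<lambda>m. LBINT t:{0..T}. (u m t - f t)^2) = (\<lambda>m. nrm (\<lambda>t. u m t - f t))"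
  unfolding nrm_def by simp

lemma exists_ms:
  assumes f: "L2_on T f"
  shows "\<exists>X. ms_integral M B T f X"
proof -
  obtain n0 p0 a0 where p0: "\<And>m. partition_of T (n0 m) (p0 m)"
    and lim0: "(\<lambda>m. nrm (\<lambda>t. step_fun (n0 m) (p0 m) (a0 m) t - f t)) \<longlonglongrightarrow> 0"
    using density[OF f] unfolding nrm_lim by blast
  define s where "s m = step_fun (n0 m) (p0 m) (a0 m)" for m
  define Y where "Y m = riemann_sum B (n0 m) (p0 m) (a0 m)" for m
  have sL2: "L2_on T (s m)" for m unfolding s_def using step_L2[OF p0] .
  have Ysqi: "sqi M (Y m)" for m unfolding Y_def using RS_sqi[OF p0] .
  have lim0': "(\<lambda>m. nrm (\<lambda>t. s m t - f t)) \<longlonglongrightarrow> 0" using lim0 unfolding s_def .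
  have cauchy: "\<exists>N. \<forall>m\<ge>N. \<forall>k\<ge>N. (\<integral>\<omega>. (Y m \<omega> - Y k \<omega>)^2 \<partial>M) < e" if e: "e > 0" for e
  proof -
    define e' where "e' = e / (4 * C + 4)"
    have e': "e' > 0" using e C_nonneg unfolding e'_def by simp
    obtain N where N: "\<And>m. m \<ge> N \<Longrightarrow> norm (nrm (\<lambda>t. s m t - f t) - 0) < e'"
      using LIMSEQ_D[OF lim0' e'] by blast
    show ?thesis
    proof (intro exI allI impI)
      fix m k assume m: "m \<ge> N" and k: "k \<ge> N"
      have "(\<integral>\<omega>. (Y m \<omega> - Y k \<omega>)^2 \<partial>M) \<le> C * nrm (\<lambda>t. s m t - s k t)"
        unfolding Y_def s_def by (rule core[OF p0 p0])
      also have "\<dots> \<le> C * (2 * nrm (\<lambda>t. s m t - f t) + 2 * nrm (\<lambda>t. s k t - f t))"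
        by (intro mult_left_mono nrm_tri sL2 f C_nonneg)
      also have "\<dots> \<le> C * (2 * e' + 2 * e')"
        using N[OF m] N[OF k] nrm_nonneg C_nonneg
        by (intro mult_left_mono add_mono) auto
      also have "\<dots> = (4 * C) * e / (4 * C + 4)"
      proof -
        have "C * (2 * e' + 2 * e') = (4 * C) * e'" by (simp add: algebra_simps)
        then show ?thesis unfolding e'_def by simp
      qed
      also have "\<dots> < e"
      proof -
        have "(4 * C) * e < e * (4 * C + 4)" using e by (simp add: algebra_simps)
        then show ?thesis using C_nonneg by (simp add: divide_less_eq)
      qed
      finally show "(\<integral>\<omega>. (Y m \<omega> - Y k \<omega>)^2 \<partial>M) < e" .
    qed
  qed
  obtain X where Xs: "sqi M X" and YX: "(\<lambda>m. \<integral>\<omega>. (Y m \<omega> - X \<omega>)^2 \<partial>M) \<longlonglongrightarrow> 0"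
    using L2_complete[OF ps Ysqi cauchy] by blast
  have "ms_integral M B T f X"
    unfolding ms_integral_def
  proof (intro conjI allI impI)
    show "X \<in> borel_measurable M" "integrable M (\<lambda>\<omega>. (X \<omega>)^2)" using Xs unfolding sqi_def by auto
    fix n p a
    assume p: "\<forall>m. partition_of T (n m) (p m)"
      and lim: "(\<lambda>m. LBINT t:{0..T}. (step_fun (n m) (p m) (a m) t - f t)^2) \<longlonglongrightarrow> 0"
    define s' where "s' m = step_fun (n m) (p m) (a m)" for m
    define Y' where "Y' m = riemann_sum B (n m) (p m) (a m)" for m
    have lim': "(\<lambda>m. nrm (\<lambda>t. s' m t - f t)) \<longlonglongrightarrow> 0" using lim unfolding s'_def nrm_lim .
    have Y'sqi: "sqi M (Y' m)" for m unfolding Y'_def using RS_sqi p by blast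
    have s'L2: "L2_on T (s' m)" for m unfolding s'_def using step_L2 p by blast
    define bnd where "bnd m = 2 * (C * (2 * nrm (\<lambda>t. s' m t - f t) + 2 * nrm (\<lambda>t. s m t - f t)))
       + 2 * (\<integral>\<omega>. (Y m \<omega> - X \<omega>)^2 \<partial>M)" for m
    have "bnd \<longlonglongrightarrow> 2 * (C * (2 * 0 + 2 * 0)) + 2 * 0"
      unfolding bnd_def by (intro tendsto_intros lim' lim0' YX)
    then have bnd: "bnd \<longlonglongrightarrow> 0" by simp
    have le: "(\<integral>\<omega>. (Y' m \<omega> - X \<omega>)^2 \<partial>M) \<le> bnd m" for m
    proof -
      have "(\<integral>\<omega>. (Y' m \<omega> - X \<omega>)^2 \<partial>M) \<le> 2 * (\<integral>\<omega>. (Y' m \<omega> - Y m \<omega>)^2 \<partial>M) + 2 * (\<integral>\<omega>. (Y m \<omega> - X \<omega>)^2 \<partial>M)"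
        by (rule Etri[OF Y'sqi Ysqi Xs])
      also have "(\<integral>\<omega>. (Y' m \<omega> - Y m \<omega>)^2 \<partial>M) \<le> C * nrm (\<lambda>t. s' m t - s m t)"
        unfolding Y'_def Y_def s'_def s_def using p p0 by (intro core) auto
      also have "\<dots> \<le> C * (2 * nrm (\<lambda>t. s' m t - f t) + 2 * nrm (\<lambda>t. s m t - f t))"
        by (intro mult_left_mono nrm_tri sL2 s'L2 f C_nonneg)
      finally show ?thesis unfolding bnd_def by simp
    qed
    show "(\<lambda>m. \<integral>\<omega>. (riemann_sum B (n m) (p m) (a m) \<omega> - X \<omega>)^2 \<partial>M) \<longlonglongrightarrow> 0"
      unfolding Y'_def[symmetric]
      by (rule tendsto_sandwich[OF _ _ tendsto_const bnd]) (use le in auto)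
  qed
  then show ?thesis by blast
qed

lemma L2_zero: "L2_on T (\<lambda>_. 0)"
  unfolding L2_on_def set_borel_measurable_def set_integrable_def by simp

lemma cov_ms:
  assumes f: "L2_on T f" and g: "L2_on T g"
    and X: "ms_integral M B T f X" and Y: "ms_integral M B T g Y"
  shows "(\<integral>\<omega>. X \<omega> * Y \<omega> \<partial>M) = Q' f g"
proof -
  obtain n1 p1 a1 where p1: "\<And>m. partition_of T (n1 m) (p1 m)"
    and lim1: "(\<lambda>m. LBINT t:{0..T}. (step_fun (n1 m) (p1 m) (a1 m) t - f t)^2) \<longlonglongrightarrow> 0"
    using density[OF f] by blast
  obtain n2 p2 a2 where p2: "\<And>m. partition_of T (n2 m) (p2 m)"
    and lim2: "(\<lambda>m. LBINT t:{0..T}. (step_fun (n2 m) (p2 m) (a2 m) t - g t)^2) \<longlonglongrightarrow> 0"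
    using density[OF g] by blast
  define s where "s m = step_fun (n1 m) (p1 m) (a1 m)" for m
  define r where "r m = step_fun (n2 m) (p2 m) (a2 m)" for m
  define U where "U m = riemann_sum B (n1 m) (p1 m) (a1 m)" for m
  define V where "V m = riemann_sum B (n2 m) (p2 m) (a2 m)" for m
  have sL2: "L2_on T (s m)" "L2_on T (r m)" for m unfolding s_def r_def using step_L2 p1 p2 by auto
  have Usqi: "sqi M (U m)" "sqi M (V m)" for m unfolding U_def V_def using RS_sqi p1 p2 by auto
  have Xs: "sqi M X" "sqi M Y" using X Y unfolding ms_integral_def sqi_def by auto
  have ls: "(\<lambda>m. nrm (\<lambda>t. s m t - f t)) \<longlonglongrightarrow> 0" using lim1 unfolding s_def nrm_lim .
  have lr: "(\<lambda>m. nrm (\<lambda>t. r m t - g t)) \<longlonglongrightarrow> 0" using lim2 unfolding r_def nrm_lim .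
  have lU: "(\<lambda>m. \<integral>\<omega>. (U m \<omega> - X \<omega>)^2 \<partial>M) \<longlonglongrightarrow> 0"
    using X p1 lim1 unfolding ms_integral_def U_def by blast
  have lV: "(\<lambda>m. \<integral>\<omega>. (V m \<omega> - Y \<omega>)^2 \<partial>M) \<longlonglongrightarrow> 0"
    using Y p2 lim2 unfolding ms_integral_def V_def by blast
  have E2: "(\<integral>\<omega>. (A \<omega>)^2 \<partial>M) \<ge> 0" for A :: "'a \<Rightarrow> real" by simp
  have swap: "(\<integral>\<omega>. (A \<omega> - A' \<omega>)^2 \<partial>M) = (\<integral>\<omega>. (A' \<omega> - A \<omega>)^2 \<partial>M)" for A A' :: "'a \<Rightarrow> real"
    by (simp add: power2_commute)
  have limE: "(\<lambda>m. \<integral>\<omega>. U m \<omega> * V m \<omega> \<partial>M) \<longlonglongrightarrow> (\<integral>\<omega>. X \<omega> * Y \<omega> \<partial>M)"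
  proof (rule conv_aux[OF lU lV E2 E2 E2 E2, of 1])
    fix m
    let ?a = "\<integral>\<omega>. (U m \<omega> - X \<omega>)^2 \<partial>M" and ?b = "\<integral>\<omega>. (V m \<omega> - Y \<omega>)^2 \<partial>M"
    have d1: "sqi M (\<lambda>\<omega>. U m \<omega> - X \<omega>)" "sqi M (\<lambda>\<omega>. V m \<omega> - Y \<omega>)"
      using sqi_diff Usqi Xs by blast+
    have "(\<integral>\<omega>. U m \<omega> * V m \<omega> \<partial>M) - (\<integral>\<omega>. X \<omega> * Y \<omega> \<partial>M)
       = (\<integral>\<omega>. (U m \<omega> - X \<omega>) * Y \<omega> \<partial>M) + (\<integral>\<omega>. U m \<omega> * (V m \<omega> - Y \<omega>) \<partial>M)"
    proof -
      have i: "integrable M (\<lambda>\<omega>. U m \<omega> * V m \<omega>)" "integrable M (\<lambda>\<omega>. X \<omega> * Y \<omega>)"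
        "integrable M (\<lambda>\<omega>. U m \<omega> * Y \<omega>)"
        using sqi_mult_int Usqi Xs by blast+
      have "(\<integral>\<omega>. (U m \<omega> - X \<omega>) * Y \<omega> \<partial>M) + (\<integral>\<omega>. U m \<omega> * (V m \<omega> - Y \<omega>) \<partial>M)
        = ((\<integral>\<omega>. U m \<omega> * Y \<omega> \<partial>M) - (\<integral>\<omega>. X \<omega> * Y \<omega> \<partial>M)) + ((\<integral>\<omega>. U m \<omega> * V m \<omega> \<partial>M) - (\<integral>\<omega>. U m \<omega> * Y \<omega> \<partial>M))"
        using i by (simp add: left_diff_distrib right_diff_distrib)
      then show ?thesis by simp
    qed
    then have "\<bar>(\<integral>\<omega>. U m \<omega> * V m \<omega> \<partial>M) - (\<integral>\<omega>. X \<omega> * Y \<omega> \<partial>M)\<bar>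
       \<le> \<bar>\<integral>\<omega>. (U m \<omega> - X \<omega>) * Y \<omega> \<partial>M\<bar> + \<bar>\<integral>\<omega>. U m \<omega> * (V m \<omega> - Y \<omega>) \<partial>M\<bar>" by simp
    also have "\<dots> \<le> sqrt ?a * sqrt (\<integral>\<omega>. (Y \<omega>)^2 \<partial>M) + sqrt (\<integral>\<omega>. (U m \<omega>)^2 \<partial>M) * sqrt ?b"
      by (intro add_mono E_cs[OF ps] d1 Usqi Xs)
    also have "\<dots> \<le> sqrt ?a * sqrt (2 * ?b + 2 * (\<integral>\<omega>. (Y \<omega>)^2 \<partial>M)) + sqrt (2 * ?a + 2 * (\<integral>\<omega>. (X \<omega>)^2 \<partial>M)) * sqrt ?b"
    proof (intro add_mono mult_left_mono mult_right_mono real_sqrt_le_mono)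
      show "(\<integral>\<omega>. (Y \<omega>)^2 \<partial>M) \<le> 2 * ?b + 2 * (\<integral>\<omega>. (Y \<omega>)^2 \<partial>M)" using E2[of "\<lambda>\<omega>. V m \<omega> - Y \<omega>"] E2[of Y] by linarith
      have "(\<integral>\<omega>. (U m \<omega> - 0)^2 \<partial>M) \<le> 2 * ?a + 2 * (\<integral>\<omega>. (X \<omega> - 0)^2 \<partial>M)"
        by (rule Etri[OF Usqi(1) Xs(1)]) (simp add: sqi_def)
      then show "(\<integral>\<omega>. (U m \<omega>)^2 \<partial>M) \<le> 2 * ?a + 2 * (\<integral>\<omega>. (X \<omega>)^2 \<partial>M)" by simp
    qed auto
    finally show "\<bar>(\<integral>\<omega>. U m \<omega> * V m \<omega> \<partial>M) - (\<integral>\<omega>. X \<omega> * Y \<omega> \<partial>M)\<bar>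
      \<le> 1 * (sqrt ?a * sqrt (2 * ?b + 2 * (\<integral>\<omega>. (Y \<omega>)^2 \<partial>M)) + sqrt (2 * ?a + 2 * (\<integral>\<omega>. (X \<omega>)^2 \<partial>M)) * sqrt ?b)"
      by simp
  qed simp
  have limQ: "(\<lambda>m. Q' (s m) (r m)) \<longlonglongrightarrow> Q' f g"
  proof (rule conv_aux[OF ls lr nrm_nonneg nrm_nonneg nrm_nonneg nrm_nonneg C_nonneg])
    fix m
    let ?a = "nrm (\<lambda>t. s m t - f t)" and ?b = "nrm (\<lambda>t. r m t - g t)"
    have "Q' (s m) (r m) - Q' f g = Q' (\<lambda>t. s m t - f t) (r m) + Q' f (\<lambda>t. r m t - g t)"
      using sL2 f g by (simp add: Q'_diff1 Q'_diff2)
    then have "\<bar>Q' (s m) (r m) - Q' f g\<bar> \<le> \<bar>Q' (\<lambda>t. s m t - f t) (r m)\<bar> + \<bar>Q' f (\<lambda>t. r m t - g t)\<bar>" by simp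
    also have "\<dots> \<le> C * sqrt ?a * sqrt (nrm (r m)) + C * sqrt (nrm f) * sqrt ?b"
      by (intro add_mono Q_prod_bound L2_diff sL2 f g)
    also have "\<dots> \<le> C * sqrt ?a * sqrt (2 * ?b + 2 * nrm g) + C * sqrt (2 * ?a + 2 * nrm f) * sqrt ?b"
    proof (intro add_mono mult_left_mono mult_right_mono real_sqrt_le_mono)
      have "nrm (\<lambda>t. r m t - 0) \<le> 2 * ?b + 2 * nrm (\<lambda>t. 0 - g t)"
        by (rule nrm_tri[OF sL2(2) L2_zero g])
      then show "nrm (r m) \<le> 2 * ?b + 2 * nrm g" by (simp add: nrm_def)
      show "nrm f \<le> 2 * ?a + 2 * nrm f" using nrm_nonneg[of f] nrm_nonneg[of "\<lambda>t. s m t - f t"] by linarith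
    qed (auto simp: C_nonneg nrm_nonneg)
    finally show "\<bar>Q' (s m) (r m) - Q' f g\<bar>
      \<le> C * (sqrt ?a * sqrt (2 * ?b + 2 * nrm g) + sqrt (2 * ?a + 2 * nrm f) * sqrt ?b)"
      by (simp add: algebra_simps)
  qed
  have "(\<lambda>m. \<integral>\<omega>. U m \<omega> * V m \<omega> \<partial>M) = (\<lambda>m. Q' (s m) (r m))"
    unfolding U_def V_def s_def r_def using EQ p1 p2 by auto
  with limE limQ show ?thesis using LIMSEQ_unique by metis
qed

end

lemma gauss_sqi:
  assumes "prob_space M" and m: "X \<in> borel_measurable M" and g: "centered_gaussian M X"
  shows "sqi M X"
proof -
  have "integrable M (\<lambda>\<omega>. (X \<omega>)^2)"
  proof (cases "AE \<omega> in M. X \<omega> = 0")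
    case True
    have ae: "AE \<omega> in M. (0::real) = (X \<omega>)^2" using True by eventually_elim simp
    show ?thesis
      by (rule integrable_cong_AE_imp[OF _ _ ae]) (use m in auto)
  next
    case False
    then obtain \<sigma> where s: "\<sigma> > 0" and D: "distributed M lborel X (normal_density 0 \<sigma>)"
      using g unfolding centered_gaussian_def by blast
    have "integrable lborel (\<lambda>x. normal_density 0 \<sigma> x * (x - 0) ^ (2 * 1))"
      using normal_moment_even[OF s, of 0 1] by (rule integrable.intros)
    then have "integrable lborel (\<lambda>x. normal_density 0 \<sigma> x * x^2)" by simp
    then show ?thesis
      using distributed_integrable[OF D, of "\<lambda>x. x^2"] by (simp add: normal_density_nonneg)
  qed
  with m show ?thesis unfolding sqi_def by simp
qed

theorem lemma3p1:
  fixes M :: "'a measure" and B :: "real \<Rightarrow> 'a \<Rightarrow> real" and K :: "real \<Rightarrow> real" and T :: real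
  assumes "prob_space M"
    and "\<forall>t\<ge>0. B t \<in> borel_measurable M"
    and "centered_gaussian_process M B"
    and "stationary_increments M B"
    and "\<forall>\<omega>\<in>space M. B 0 \<omega> = 0"
    and "T > 0"
    and "\<forall>x. K (- x) = K x"
    and "set_integrable lborel {-T..T} K"
    and "\<forall>s\<in>{0..T}. \<forall>t\<in>{0..T}.
           (\<integral>\<omega>. B t \<omega> * B s \<omega> \<partial>M) = (LBINT u:{0..t}. LBINT v:{0..s}. K (u - v))"
  shows "(\<forall>f. L2_on T f \<longrightarrow> (\<exists>X. ms_integral M B T f X)) \<and>
         (\<forall>f g X Y. L2_on T f \<longrightarrow> L2_on T g \<longrightarrow> ms_integral M B T f X \<longrightarrow> ms_integral M B T g Y \<longrightarrow>
            (\<integral>\<omega>. X \<omega> * Y \<omega> \<partial>M) = (LBINT t:{0..T}. f t * (LBINT s:{0..T}. K (t - s) * g s)))"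
proof -
  interpret kern T K using assms(6,8) by unfold_locales
  have Bsqi: "sqi M (B t)" if t: "t \<in> {0..T}" for t
  proof (rule gauss_sqi[OF assms(1)])
    show "B t \<in> borel_measurable M" using assms(2) t by auto
    have "centered_gaussian M (\<lambda>\<omega>. \<Sum>i\<in>{t}. (\<lambda>_. 1::real) i * B i \<omega>)"
      using assms(3)[unfolded centered_gaussian_process_def, rule_format, of "{t}" "\<lambda>_. 1"] t by simp
    then show "centered_gaussian M (B t)" by simp
  qed
  have kk: "kern T K" using assms(6,8) by unfold_locales
  have PA: "proc_axioms T K M B"
  proof (rule proc_axioms.intro)
    show "prob_space M" by (rule assms(1))
    show "sqi M (B t)" if "t \<in> {0..T}" for t using Bsqi[OF that] .
    show "(\<integral>\<omega>. B t \<omega> * B s \<omega> \<partial>M) = cc t s" if "s \<in> {0..T}" "t \<in> {0..T}" for s t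
      using assms(9) that unfolding cc_def by blast
  qed
  interpret proc T K M B using kk PA by (rule proc.intro)
  have A: "\<forall>f. L2_on T f \<longrightarrow> (\<exists>X. ms_integral M B T f X)"
    using exists_ms by blast
  have B: "\<forall>f g X Y. L2_on T f \<longrightarrow> L2_on T g \<longrightarrow> ms_integral M B T f X \<longrightarrow> ms_integral M B T g Y \<longrightarrow>
            (\<integral>\<omega>. X \<omega> * Y \<omega> \<partial>M) = (LBINT t:{0..T}. f t * (LBINT s:{0..T}. K (t - s) * g s))"
  proof (intro allI impI)
    fix f g X Y assume "L2_on T f" "L2_on T g" "ms_integral M B T f X" "ms_integral M B T g Y"
    then show "(\<integral>\<omega>. X \<omega> * Y \<omega> \<partial>M) = (LBINT t:{0..T}. f t * (LBINT s:{0..T}. K (t - s) * g s))"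
      unfolding Q_eq by (rule cov_ms)
  qed
  from A B show ?thesis by (rule conjI)
qed


end
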